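(* Let $(\Gamma,\lambda)$ and $(G,\nu)$ be $\sigma$-compact lcH-groupoids endowed with Haar systems, and let $h:(\Gamma,\lambda)\to(G,\nu)$ be a morphism, with $\Delta_h$ a continuous positive function on $G\rtimes_h\Gamma$ as in condition (6) below. Then $\Delta_h(x,\gamma)=\Delta_h(r(x),\gamma)$ for all $(x,\gamma)\in G\rtimes_h\Gamma$.
   Context: An lcH-groupoid is a groupoid with a locally compact Hausdorff topology for which inversion and multiplication (on composable pairs, relative product topology) are continuous; $r(x)=xx^{-1}$, $d(x)=x^{-1}x$, $G^t=r^{-1}(t)$, $G_t=d^{-1}(t)$. A Haar system on $G$ is a family $\nu=\{\nu^t\}_{t\in G^{(0)}}$ of positive Radon measures with $\mathrm{supp}\,\nu^t=G^t$, $t\mapsto\int f\,d\nu^t$ continuous for each $f\in C_c(G)$, and $\int f(y)d\nu^{r(x)}(y)=\int f(xy)d\nu^{d(x)}(y)$; $\nu_t$ denotes the image of $\nu^t$ under $x\mapsto x^{-1}$. A continuous morphism $h$ from $\Gamma$ to $G$ consists of a continuous map $\rho_h:G^{(0)}\to\Gamma^{(0)}$ and a continuous map $(\gamma,x)\mapsto\gamma\cdot_hx$ from $\Gamma\star_hG=\{(\gamma,x)\in\Gamma\times G:d(\gamma)=\rho_h(r(x))\}$ (relative product topology) to $G$ such that: (1) $\rho_h(r(\gamma\cdot_hx))=r(\gamma)$; (2) $\rho_h(r(x))\cdot_hx=x$; (3) $(\gamma_1\gamma_2)\cdot_hx=\gamma_1\cdot_h(\gamma_2\cdot_hx)$ for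 composable $\gamma_1,\gamma_2$ with $(\gamma_2,x)\in\Gamma\star_hG$; (4) $d(\gamma\cdot_hx)=d(x)$; (5) $(\gamma\cdot_hx_1)x_2=\gamma\cdot_h(x_1x_2)$ when $(x_1,x_2)$ composable. Let $G\rtimes_h\Gamma=\{(x,\gamma)\in G\times\Gamma:\rho_h(r(x))=r(\gamma)\}$. A morphism $h:(\Gamma,\lambda)\to(G,\nu)$ is such a continuous morphism satisfying (6): there is a continuous positive function $\Delta_h$ on $G\rtimes_h\Gamma$ with $\int\int g(\gamma^{-1}\cdot_hx,\gamma^{-1})\Delta_h(\gamma^{-1}\cdot_hx,\gamma^{-1})\,d\lambda^{\rho_h(r(x))}(\gamma)\,d\nu_t(x)=\int\int g(x,\gamma)\,d\lambda^{\rho_h(r(x))}(\gamma)\,d\nu_t(x)$ for all $t\in G^{(0)}$ and all Borel $g\ge0$ on $G\rtimes_h\Gamma$. *)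

theory Defs
  imports "HOL-Analysis.Analysis"
begin

section \<open>Groupoids (elements = all elements of a type)\<close>

text \<open>A groupoid is given by a multiplication (only meaningful on composable
pairs) and an inversion.  Range and source maps: r x = x x^-1, d x = x^-1 x.
A pair (x,y) is composable iff d x = r y.\<close>

definition g_r :: "('a \<Rightarrow> 'a \<Rightarrow> 'a) \<Rightarrow> ('a \<Rightarrow> 'a) \<Rightarrow> 'a \<Rightarrow> 'a" where
  "g_r gm gi x = gm x (gi x)"

definition g_d :: "('a \<Rightarrow> 'a \<Rightarrow> 'a) \<Rightarrow> ('a \<Rightarrow> 'a) \<Rightarrow> 'a \<Rightarrow> 'a" where
  "g_d gm gi x = gm (gi x) x"

definition g_units :: "('a \<Rightarrow> 'a \<Rightarrow> 'a) \<Rightarrow> ('a \<Rightarrow> 'a) \<Rightarrow> 'a set" where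
  "g_units gm gi = range (g_r gm gi)"

definition g_comp :: "('a \<Rightarrow> 'a \<Rightarrow> 'a) \<Rightarrow> ('a \<Rightarrow> 'a) \<Rightarrow> ('a \<times> 'a) set" where
  "g_comp gm gi = {(x, y). g_d gm gi x = g_r gm gi y}"

definition groupoid :: "('a \<Rightarrow> 'a \<Rightarrow> 'a) \<Rightarrow> ('a \<Rightarrow> 'a) \<Rightarrow> bool" where
  "groupoid gm gi \<longleftrightarrow>
     (\<forall>x. gi (gi x) = x) \<and>
     (\<forall>x y z. (x, y) \<in> g_comp gm gi \<and> (y, z) \<in> g_comp gm gi \<longrightarrow>
        (gm x y, z) \<in> g_comp gm gi \<and> (x, gm y z) \<in> g_comp gm gi \<and>
        gm (gm x y) z = gm x (gm y z)) \<and>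
     (\<forall>x y. (x, y) \<in> g_comp gm gi \<longrightarrow> gm (gi x) (gm x y) = y) \<and>
     (\<forall>z x. (z, x) \<in> g_comp gm gi \<longrightarrow> gm (gm z x) (gi x) = z)"

definition lcH_groupoid :: "('a::t2_space \<Rightarrow> 'a \<Rightarrow> 'a) \<Rightarrow> ('a \<Rightarrow> 'a) \<Rightarrow> bool" where
  "lcH_groupoid gm gi \<longleftrightarrow>
     groupoid gm gi \<and>
     locally_compact_space (euclidean :: 'a topology) \<and>
     continuous_on UNIV gi \<and>
     continuous_on (g_comp gm gi) (\<lambda>p. gm (fst p) (snd p))"

definition sigma_compact_type :: "'a::topological_space itself \<Rightarrow> bool" where
  "sigma_compact_type _ \<longleftrightarrow>
     (\<exists>F :: 'a set set. countable F \<and> (\<forall>K\<in>F. compact K) \<and> \<Union>F = UNIV)"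

definition radon_measure :: "'a::topological_space measure \<Rightarrow> bool" where
  "radon_measure M \<longleftrightarrow>
     sets M = sets borel \<and>
     (\<forall>K. compact K \<longrightarrow> emeasure M K < \<infinity>) \<and>
     (\<forall>A \<in> sets borel. emeasure M A = (INF U \<in> {U. open U \<and> A \<subseteq> U}. emeasure M U)) \<and>
     (\<forall>U. open U \<longrightarrow> emeasure M U = (SUP K \<in> {K. compact K \<and> K \<subseteq> U}. emeasure M K))"

definition msupport :: "'a::topological_space measure \<Rightarrow> 'a set" where
  "msupport M = {x. \<forall>U. open U \<and> x \<in> U \<longrightarrow> emeasure M U > 0}"

definition Cc :: "('a::topological_space \<Rightarrow> real) set" where
  "Cc = {f. continuous_on UNIV f \<and> (\<exists>K. compact K \<and> (\<forall>x. x \<notin> K \<longrightarrow> f x = 0))}"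

definition haar_system ::
  "('a::t2_space \<Rightarrow> 'a \<Rightarrow> 'a) \<Rightarrow> ('a \<Rightarrow> 'a) \<Rightarrow> ('a \<Rightarrow> 'a measure) \<Rightarrow> bool" where
  "haar_system gm gi nu \<longleftrightarrow>
     (\<forall>t \<in> g_units gm gi. radon_measure (nu t) \<and>
         msupport (nu t) = {x. g_r gm gi x = t}) \<and>
     (\<forall>f \<in> Cc. continuous_on (g_units gm gi) (\<lambda>t. integral\<^sup>L (nu t) f)) \<and>
     (\<forall>f \<in> Cc. \<forall>x.
        (\<integral>y. f y \<partial>nu (g_r gm gi x)) = (\<integral>y. f (gm x y) \<partial>nu (g_d gm gi x)))"

definition haar_lower :: "('a::topological_space \<Rightarrow> 'a) \<Rightarrow> ('a \<Rightarrow> 'a measure) \<Rightarrow> 'a \<Rightarrow> 'a measure" where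
  "haar_lower gi nu t = distr (nu t) borel gi"

text \<open>Gamma (type 'g, multGa, invGa) and G (type 'a, multG, invG).
rho : G^(0) \<rightarrow> Gamma^(0), act : Gamma \<star>_h G \<rightarrow> G.\<close>

definition star_h ::
  "('g \<Rightarrow> 'g \<Rightarrow> 'g) \<Rightarrow> ('g \<Rightarrow> 'g) \<Rightarrow> ('a \<Rightarrow> 'a \<Rightarrow> 'a) \<Rightarrow> ('a \<Rightarrow> 'a) \<Rightarrow> ('a \<Rightarrow> 'g) \<Rightarrow> ('g \<times> 'a) set" where
  "star_h multGa invGa multG invG rho =
     {(\<gamma>, x). g_d multGa invGa \<gamma> = rho (g_r multG invG x)}"

definition semidirect_h ::
  "('g \<Rightarrow> 'g \<Rightarrow> 'g) \<Rightarrow> ('g \<Rightarrow> 'g) \<Rightarrow> ('a \<Rightarrow> 'a \<Rightarrow> 'a) \<Rightarrow> ('a \<Rightarrow> 'a) \<Rightarrow> ('a \<Rightarrow> 'g) \<Rightarrow> ('a \<times> 'g) set" where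
  "semidirect_h multGa invGa multG invG rho =
     {(x, \<gamma>). rho (g_r multG invG x) = g_r multGa invGa \<gamma>}"

definition continuous_morphism ::
  "('g::topological_space \<Rightarrow> 'g \<Rightarrow> 'g) \<Rightarrow> ('g \<Rightarrow> 'g) \<Rightarrow>
   ('a::topological_space \<Rightarrow> 'a \<Rightarrow> 'a) \<Rightarrow> ('a \<Rightarrow> 'a) \<Rightarrow>
   ('a \<Rightarrow> 'g) \<Rightarrow> ('g \<Rightarrow> 'a \<Rightarrow> 'a) \<Rightarrow> bool" where
  "continuous_morphism multGa invGa multG invG rho act \<longleftrightarrow>
     rho ` g_units multG invG \<subseteq> g_units multGa invGa \<and>
     continuous_on (g_units multG invG) rho \<and>
     continuous_on (star_h multGa invGa multG invG rho) (\<lambda>p. act (fst p) (snd p)) \<and>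
     (\<forall>(\<gamma>, x) \<in> star_h multGa invGa multG invG rho.
        rho (g_r multG invG (act \<gamma> x)) = g_r multGa invGa \<gamma>) \<and>
     (\<forall>x. act (rho (g_r multG invG x)) x = x) \<and>
     (\<forall>\<gamma>1 \<gamma>2 x. (\<gamma>1, \<gamma>2) \<in> g_comp multGa invGa \<and>
          (\<gamma>2, x) \<in> star_h multGa invGa multG invG rho \<longrightarrow>
          act (multGa \<gamma>1 \<gamma>2) x = act \<gamma>1 (act \<gamma>2 x)) \<and>
     (\<forall>(\<gamma>, x) \<in> star_h multGa invGa multG invG rho.
        g_d multG invG (act \<gamma> x) = g_d multG invG x) \<and>
     (\<forall>\<gamma> x1 x2. (\<gamma>, x1) \<in> star_h multGa invGa multG invG rho \<and>
          (x1, x2) \<in> g_comp multG invG \<longrightarrow>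
          multG (act \<gamma> x1) x2 = act \<gamma> (multG x1 x2))"

text \<open>Condition (6) with the given function Delta.\<close>
definition morphism_modular ::
  "('g::topological_space \<Rightarrow> 'g \<Rightarrow> 'g) \<Rightarrow> ('g \<Rightarrow> 'g) \<Rightarrow> ('g \<Rightarrow> 'g measure) \<Rightarrow>
   ('a::topological_space \<Rightarrow> 'a \<Rightarrow> 'a) \<Rightarrow> ('a \<Rightarrow> 'a) \<Rightarrow> ('a \<Rightarrow> 'a measure) \<Rightarrow>
   ('a \<Rightarrow> 'g) \<Rightarrow> ('g \<Rightarrow> 'a \<Rightarrow> 'a) \<Rightarrow> ('a \<Rightarrow> 'g \<Rightarrow> real) \<Rightarrow> bool" where
  "morphism_modular multGa invGa lam multG invG nu rho act Delta \<longleftrightarrow>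
     continuous_on (semidirect_h multGa invGa multG invG rho) (\<lambda>p. Delta (fst p) (snd p)) \<and>
     (\<forall>(x, \<gamma>) \<in> semidirect_h multGa invGa multG invG rho. Delta x \<gamma> > 0) \<and>
     (\<forall>t \<in> g_units multG invG. \<forall>g :: 'a \<times> 'g \<Rightarrow> real.
        g \<in> borel_measurable (restrict_space borel (semidirect_h multGa invGa multG invG rho)) \<and>
        (\<forall>p. g p \<ge> 0) \<longrightarrow>
        (\<integral>\<^sup>+ x. (\<integral>\<^sup>+ \<gamma>. ennreal (g (act (invGa \<gamma>) x, invGa \<gamma>) *
                                   Delta (act (invGa \<gamma>) x) (invGa \<gamma>))
                    \<partial>lam (rho (g_r multG invG x))) \<partial>haar_lower invG nu t)
        = (\<integral>\<^sup>+ x. (\<integral>\<^sup>+ \<gamma>. ennreal (g (x, \<gamma>)) \<partial>lam (rho (g_r multG invG x)))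
              \<partial>haar_lower invG nu t))"

definition haar_morphism ::
  "('g::topological_space \<Rightarrow> 'g \<Rightarrow> 'g) \<Rightarrow> ('g \<Rightarrow> 'g) \<Rightarrow> ('g \<Rightarrow> 'g measure) \<Rightarrow>
   ('a::topological_space \<Rightarrow> 'a \<Rightarrow> 'a) \<Rightarrow> ('a \<Rightarrow> 'a) \<Rightarrow> ('a \<Rightarrow> 'a measure) \<Rightarrow>
   ('a \<Rightarrow> 'g) \<Rightarrow> ('g \<Rightarrow> 'a \<Rightarrow> 'a) \<Rightarrow> ('a \<Rightarrow> 'g \<Rightarrow> real) \<Rightarrow> bool" where
  "haar_morphism multGa invGa lam multG invG nu rho act Delta \<longleftrightarrow>
     continuous_morphism multGa invGa multG invG rho act \<and>
     morphism_modular multGa invGa lam multG invG nu rho act Delta"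

end

theory Submission
  imports Defs
begin

context
  fixes gm :: "'a \<Rightarrow> 'a \<Rightarrow> 'a" and gi :: "'a \<Rightarrow> 'a"
  assumes grp: "groupoid gm gi"
begin

lemma gp_inv_inv[simp]: "gi (gi x) = x"
  using grp unfolding groupoid_def by blast

lemma gp_comp_iff: "(x, y) \<in> g_comp gm gi \<longleftrightarrow> g_d gm gi x = g_r gm gi y"
  by (simp add: g_comp_def)

lemma gp_r_inv[simp]: "g_r gm gi (gi x) = g_d gm gi x"
  by (simp add: g_r_def g_d_def)

lemma gp_d_inv[simp]: "g_d gm gi (gi x) = g_r gm gi x"
  by (simp add: g_r_def g_d_def)

lemma gp_comp_inv1: "(x, gi x) \<in> g_comp gm gi"
  by (simp add: gp_comp_iff)

lemma gp_comp_inv2: "(gi x, x) \<in> g_comp gm gi"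
  by (simp add: gp_comp_iff)

lemma gp_assoc: "(x, y) \<in> g_comp gm gi \<Longrightarrow> (y, z) \<in> g_comp gm gi \<Longrightarrow>
   (gm x y, z) \<in> g_comp gm gi \<and> (x, gm y z) \<in> g_comp gm gi \<and> gm (gm x y) z = gm x (gm y z)"
  using grp unfolding groupoid_def by blast

lemma gp_cancel_left: "(x, y) \<in> g_comp gm gi \<Longrightarrow> gm (gi x) (gm x y) = y"
  using grp unfolding groupoid_def by blast

lemma gp_cancel_right: "(z, x) \<in> g_comp gm gi \<Longrightarrow> gm (gm z x) (gi x) = z"
  using grp unfolding groupoid_def by blast

lemma gp_r_mult_self[simp]: "gm (g_r gm gi x) x = x"
  using gp_cancel_right[OF gp_comp_inv1[of x]] by (simp add: g_r_def)

lemma gp_mult_d_self[simp]: "gm x (g_d gm gi x) = x"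
  using gp_cancel_left[OF gp_comp_inv2[of x]] by (simp add: g_d_def)

lemma gp_d_mult: "(x, y) \<in> g_comp gm gi \<Longrightarrow> g_d gm gi (gm x y) = g_d gm gi y"
proof -
  assume a: "(x, y) \<in> g_comp gm gi"
  have "(gm x y, gi y) \<in> g_comp gm gi" using gp_assoc[OF a gp_comp_inv1[of y]] by blast
  then show ?thesis by (simp add: gp_comp_iff)
qed

lemma gp_r_mult: "(x, y) \<in> g_comp gm gi \<Longrightarrow> g_r gm gi (gm x y) = g_r gm gi x"
proof -
  assume a: "(x, y) \<in> g_comp gm gi"
  have "(gi x, gm x y) \<in> g_comp gm gi" using gp_assoc[OF gp_comp_inv2[of x] a] by blast
  then show ?thesis by (simp add: gp_comp_iff)
qed

lemma gp_r_r[simp]: "g_r gm gi (g_r gm gi x) = g_r gm gi x"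
  using gp_r_mult[OF gp_comp_inv1[of x]] by (simp add: g_r_def)

lemma gp_d_r[simp]: "g_d gm gi (g_r gm gi x) = g_r gm gi x"
  using gp_d_mult[OF gp_comp_inv1[of x]] by (simp add: g_r_def)

lemma gp_d_d[simp]: "g_d gm gi (g_d gm gi x) = g_d gm gi x"
  using gp_d_mult[OF gp_comp_inv2[of x]] by (simp add: g_d_def)

lemma gp_r_d[simp]: "g_r gm gi (g_d gm gi x) = g_d gm gi x"
  using gp_r_mult[OF gp_comp_inv2[of x]] by (simp add: g_d_def)

lemma gp_inv_mult: "(x, y) \<in> g_comp gm gi \<Longrightarrow> gi (gm x y) = gm (gi y) (gi x)"
proof -
  assume a: "(x, y) \<in> g_comp gm gi"
  let ?p = "gm x y"
  have c1: "(gi y, gi x) \<in> g_comp gm gi" using a by (simp add: gp_comp_iff)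
  have c2: "(gm (gi y) (gi x), ?p) \<in> g_comp gm gi"
    using a c1 by (simp add: gp_comp_iff gp_d_mult gp_r_mult)
  have e1: "gm (gm (gi y) (gi x)) ?p = gm (gi y) (gm (gi x) ?p)"
    using gp_assoc[OF c1, of ?p] a by (simp add: gp_comp_iff gp_r_mult)
  also have "\<dots> = gm (gi y) y" using gp_cancel_left[OF a] by simp
  also have "\<dots> = g_d gm gi y" by (simp add: g_d_def)
  finally have e1: "gm (gm (gi y) (gi x)) ?p = g_d gm gi y" .
  have e2: "gm (gi ?p) ?p = g_d gm gi y" using gp_d_mult[OF a] by (simp add: g_d_def)
  have "gm (gm (gm (gi y) (gi x)) ?p) (gi ?p) = gm (gi y) (gi x)" using gp_cancel_right[OF c2] .
  moreover have "gm (gm (gi ?p) ?p) (gi ?p) = gi ?p" using gp_cancel_right[OF gp_comp_inv2[of ?p]] .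
  ultimately show ?thesis using e1 e2 by simp
qed

end

lemma nn_integral_least_meas:
  assumes "\<And>g. g \<in> borel_measurable M \<Longrightarrow> (\<And>x. g x \<le> f x) \<Longrightarrow> integral\<^sup>N M g \<le> c"
  shows "integral\<^sup>N M f \<le> c"
  unfolding nn_integral_def
proof (rule SUP_least)
  fix g assume g: "g \<in> {g. simple_function M g \<and> g \<le> f}"
  then have "integral\<^sup>S M g = integral\<^sup>N M g" by (simp add: nn_integral_eq_simple_integral)
  also have "\<dots> \<le> c" using g by (intro assms) (auto simp: borel_measurable_simple_function le_fun_def)
  finally show "integral\<^sup>S M g \<le> c" .
qed

lemma nn_integral_cmult_le_any:
  fixes a :: real
  assumes "0 < a"
  shows "(\<integral>\<^sup>+ x. ennreal a * f x \<partial>M) \<le> ennreal a * integral\<^sup>N M f"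
proof (rule nn_integral_least_meas)
  have ca: "ennreal a * ennreal (1/a) = 1" "ennreal (1/a) * ennreal a = 1"
    using assms by (simp_all flip: ennreal_mult)
  fix g assume gm: "g \<in> borel_measurable M" and gle: "\<And>x. g x \<le> ennreal a * f x"
  have "\<And>x. g x * ennreal (1/a) \<le> f x"
  proof -
    fix x
    have "g x * ennreal (1/a) \<le> ennreal a * f x * ennreal (1/a)" using gle[of x] by (intro mult_right_mono) auto
    also have "\<dots> = f x * (ennreal a * ennreal (1/a))" by (simp add: ac_simps)
    also have "\<dots> = f x" using ca by simp
    finally show "g x * ennreal (1/a) \<le> f x" .
  qed
  then have "(\<integral>\<^sup>+ x. g x * ennreal (1/a) \<partial>M) \<le> integral\<^sup>N M f" by (intro nn_integral_mono) auto
  then have "ennreal a * (\<integral>\<^sup>+ x. g x * ennreal (1/a) \<partial>M) \<le> ennreal a * integral\<^sup>N M f" by (intro mult_left_mono) auto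
  moreover have "ennreal a * (\<integral>\<^sup>+ x. g x * ennreal (1/a) \<partial>M) = integral\<^sup>N M g"
  proof -
    have "ennreal a * (\<integral>\<^sup>+ x. g x * ennreal (1/a) \<partial>M) = ennreal a * (integral\<^sup>N M g * ennreal (1/a))"
      using gm by (subst nn_integral_multc) auto
    also have "\<dots> = integral\<^sup>N M g * (ennreal a * ennreal (1/a))" by (simp add: ac_simps)
    also have "\<dots> = integral\<^sup>N M g" using ca by simp
    finally show ?thesis .
  qed
  ultimately show "integral\<^sup>N M g \<le> ennreal a * integral\<^sup>N M f" by simp
qed

lemma nn_integral_transport:
  assumes T: "T \<in> measurable M N" and T': "T' \<in> measurable N M" and D: "D \<in> sets N"
    and inv1: "\<And>y. y \<in> D \<Longrightarrow> T (T' y) = y"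
    and inv2: "AE x in M. T x \<in> D \<and> T' (T x) = x"
  shows "integral\<^sup>N (distr M N T) F = (\<integral>\<^sup>+ x. F (T x) \<partial>M)"
proof (rule antisym)
  show "integral\<^sup>N (distr M N T) F \<le> (\<integral>\<^sup>+ x. F (T x) \<partial>M)"
  proof (rule nn_integral_least_meas)
    fix g assume g: "g \<in> borel_measurable (distr M N T)" "\<And>x. g x \<le> F x"
    have "integral\<^sup>N (distr M N T) g = (\<integral>\<^sup>+ x. g (T x) \<partial>M)"
      using g T by (intro nn_integral_distr) auto
    also have "\<dots> \<le> (\<integral>\<^sup>+ x. F (T x) \<partial>M)" using g by (intro nn_integral_mono) auto
    finally show "integral\<^sup>N (distr M N T) g \<le> (\<integral>\<^sup>+ x. F (T x) \<partial>M)" .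
  qed
next
  show "(\<integral>\<^sup>+ x. F (T x) \<partial>M) \<le> integral\<^sup>N (distr M N T) F"
  proof (rule nn_integral_least_meas)
    fix g assume gm: "g \<in> borel_measurable M" and gle: "\<And>x. g x \<le> F (T x)"
    define g' where "g' y = g (T' y) * indicator D y" for y
    have g'm: "g' \<in> borel_measurable N" unfolding g'_def using gm T' D by measurable
    have g'le: "g' y \<le> F y" for y
      using gle[of "T' y"] inv1[of y] by (auto simp: g'_def indicator_def)
    have "integral\<^sup>N M g = (\<integral>\<^sup>+ x. g' (T x) \<partial>M)"
      by (rule nn_integral_cong_AE) (use inv2 in \<open>auto simp: g'_def\<close>)
    also have "\<dots> = integral\<^sup>N (distr M N T) g'"
      using g'm T by (intro nn_integral_distr[symmetric]) auto
    also have "\<dots> \<le> integral\<^sup>N (distr M N T) F" using g'le by (intro nn_integral_mono) auto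
    finally show "integral\<^sup>N M g \<le> integral\<^sup>N (distr M N T) F" .
  qed
qed

lemma radon_D:
  assumes "radon_measure M"
  shows "sets M = sets borel" "\<forall>K. compact K \<longrightarrow> emeasure M K < \<infinity>"
    "\<forall>A \<in> sets borel. emeasure M A = (INF U \<in> {U. open U \<and> A \<subseteq> U}. emeasure M U)"
    "\<forall>U. open U \<longrightarrow> emeasure M U = (SUP K \<in> {K. compact K \<and> K \<subseteq> U}. emeasure M K)"
proof -
  have h: "sets M = sets borel \<and> (\<forall>K. compact K \<longrightarrow> emeasure M K < \<infinity>) \<and>
    (\<forall>A \<in> sets borel. emeasure M A = (INF U \<in> {U. open U \<and> A \<subseteq> U}. emeasure M U)) \<and>
    (\<forall>U. open U \<longrightarrow> emeasure M U = (SUP K \<in> {K. compact K \<and> K \<subseteq> U}. emeasure M K))"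
    using assms unfolding radon_measure_def by assumption
  show "sets M = sets borel" using h by (rule conjunct1)
  show "\<forall>K. compact K \<longrightarrow> emeasure M K < \<infinity>" using h by (rule conjunct2[THEN conjunct1])
  show "\<forall>A \<in> sets borel. emeasure M A = (INF U \<in> {U. open U \<and> A \<subseteq> U}. emeasure M U)"
    using h by (rule conjunct2[THEN conjunct2, THEN conjunct1])
  show "\<forall>U. open U \<longrightarrow> emeasure M U = (SUP K \<in> {K. compact K \<and> K \<subseteq> U}. emeasure M K)"
    using h by (rule conjunct2[THEN conjunct2, THEN conjunct2])
qed

lemma radon_compact_fin: "radon_measure M \<Longrightarrow> compact K \<Longrightarrow> emeasure M K < \<infinity>"
  using radon_D(2) by blast

lemma radon_outer: "radon_measure M \<Longrightarrow> A \<in> sets borel \<Longrightarrow>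
    emeasure M A = (INF U \<in> {U. open U \<and> A \<subseteq> U}. emeasure M U)"
  using radon_D(3) by blast

lemma radon_inner: "radon_measure M \<Longrightarrow> open U \<Longrightarrow>
    emeasure M U = (SUP K \<in> {K. compact K \<and> K \<subseteq> U}. emeasure M K)"
  using radon_D(4) by blast

lemma radon_sets: "radon_measure M \<Longrightarrow> sets M = sets borel"
  by (rule radon_D(1))

lemma radon_space: "radon_measure M \<Longrightarrow> space M = UNIV"
  using sets_eq_imp_space_eq[of M borel] radon_D(1)[of M] by simp

lemma msupport_compl_open: "open (- msupport M)"
proof -
  have "- msupport M = \<Union>{U. open U \<and> emeasure M U = 0}"
    by (auto simp: msupport_def not_less)
  then show ?thesis by auto
qed

lemma radon_msupport_null:
  assumes R: "radon_measure M"
  shows "emeasure M (- msupport M) = 0"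
proof -
  let ?O = "- msupport M"
  have O: "open ?O" by (rule msupport_compl_open)
  have "emeasure M ?O = (SUP K \<in> {K. compact K \<and> K \<subseteq> ?O}. emeasure M K)"
    using R O by (rule radon_inner)
  also have "\<dots> = 0"
  proof (rule antisym)
    show "(SUP K \<in> {K. compact K \<and> K \<subseteq> ?O}. emeasure M K) \<le> 0"
    proof (rule SUP_least)
      fix K assume K: "K \<in> {K. compact K \<and> K \<subseteq> ?O}"
      let ?T = "{U. open U \<and> emeasure M U = 0}"
      have "K \<subseteq> \<Union>?T"
      proof
        fix x assume "x \<in> K"
        then have "x \<notin> msupport M" using K by auto
        then obtain U where "open U" "x \<in> U" "\<not> 0 < emeasure M U" unfolding msupport_def by auto
        then show "x \<in> \<Union>?T" by (auto simp: not_gr_zero)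
      qed
      moreover have "compact K" using K by simp
      ultimately obtain T' where T': "T' \<subseteq> ?T" "finite T'" "K \<subseteq> \<Union>T'"
        using compactE[of K ?T] by blast
      have "open (\<Union>T')" using T' by auto
      then have "emeasure M K \<le> emeasure M (\<Union>T')"
        using T' R by (intro emeasure_mono) (auto simp: radon_sets)
      also have "\<dots> = emeasure M (\<Union>U\<in>T'. U)" by simp
      also have "\<dots> \<le> (\<Sum>U\<in>T'. emeasure M U)"
        using T' R by (intro emeasure_subadditive_finite) (auto simp: radon_sets)
      also have "\<dots> = 0" using T' by (intro sum.neutral) auto
      finally show "emeasure M K \<le> 0" .
    qed
  qed simp
  finally show ?thesis .
qed

lemma radon_AE_msupport:
  assumes R: "radon_measure M"
  shows "AE x in M. x \<in> msupport M"
proof (rule AE_I')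
  show "- msupport M \<in> null_sets M"
    using radon_msupport_null[OF R] msupport_compl_open[of M] R
    by (auto simp: null_sets_def radon_sets)
qed auto

lemma Cc_integrable:
  fixes M :: "'a::t2_space measure"
  assumes R: "radon_measure M" and f: "f \<in> Cc"
  shows "integrable M f"
proof -
  from f obtain K where K: "compact K" "\<And>x. x \<notin> K \<Longrightarrow> f x = 0" and fc: "continuous_on UNIV f"
    by (auto simp: Cc_def)
  have "compact (f ` K)" using K fc by (intro compact_continuous_image) (auto intro: continuous_on_subset)
  then have "bounded (f ` K)" by (rule compact_imp_bounded)
  then obtain B where B0: "\<forall>y\<in>f ` K. norm y \<le> B" by (auto simp: bounded_iff)
  then have B: "\<And>x. x \<in> K \<Longrightarrow> norm (f x) \<le> B" by auto
  have fm: "f \<in> borel_measurable M"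
    by (subst measurable_cong_sets[OF radon_sets[OF R] refl]) (rule borel_measurable_continuous_onI[OF fc])
  have Kfin: "emeasure M K < \<infinity>" using R K(1) by (rule radon_compact_fin)
  have Ks: "K \<in> sets M" using radon_sets[OF R] borel_closed[OF compact_imp_closed[OF K(1)]] by simp
  have "integrable M (\<lambda>x. B * indicator K x)"
    using Kfin Ks by (intro integrable_mult_right) (simp add: integrable_indicator_iff)
  then show ?thesis
  proof (rule Bochner_Integration.integrable_bound)
    show "f \<in> borel_measurable M" by (rule fm)
    show "AE x in M. norm (f x) \<le> norm (B * indicator K x)"
    proof (rule AE_I2)
      fix x show "norm (f x) \<le> norm (B * indicator K x)"
        using B[of x] K(2)[of x] by (cases "x \<in> K") auto
    qed
  qed
qed

lemma Cc_nn_integral: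
  fixes M :: "'a::t2_space measure"
  assumes R: "radon_measure M" and f: "f \<in> Cc" and nn: "\<And>x. 0 \<le> f x"
  shows "(\<integral>\<^sup>+ x. ennreal (f x) \<partial>M) = ennreal (integral\<^sup>L M f)"
  using nn_integral_eq_integral[OF Cc_integrable[OF R f]] nn by auto

lemma Cc_zero_on_support:
  fixes M :: "'a::t2_space measure"
  assumes R: "radon_measure M" and f: "f \<in> Cc" and nn: "\<And>x. 0 \<le> f x"
    and z: "integral\<^sup>L M f = 0" and a: "a \<in> msupport M"
  shows "f a = 0"
proof (rule ccontr)
  assume "f a \<noteq> 0"
  then have fa: "f a > 0" using nn[of a] by auto
  let ?U = "{x. f x > f a / 2}"
  have fc: "continuous_on UNIV f" using f by (simp add: Cc_def)
  have U: "open ?U" using open_Collect_less[OF continuous_on_const fc, of "f a / 2"] by simp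
  have aU: "a \<in> ?U" using fa by simp
  have pos: "emeasure M ?U > 0" using a U aU by (auto simp: msupport_def)
  have "ennreal (f a / 2) * emeasure M ?U = (\<integral>\<^sup>+ x. ennreal (f a / 2) * indicator ?U x \<partial>M)"
    using U R by (subst nn_integral_cmult_indicator) (auto simp: radon_sets)
  also have "\<dots> \<le> (\<integral>\<^sup>+ x. ennreal (f x) \<partial>M)"
    by (intro nn_integral_mono) (auto simp: indicator_def intro!: ennreal_leI)
  also have "\<dots> = 0" using Cc_nn_integral[OF R f nn] z by simp
  finally have "ennreal (f a / 2) * emeasure M ?U = 0" by simp
  then show False using pos fa by (simp add: mult_eq_0_iff) 
qed

lemma t2_Hausdorff: "Hausdorff_space (euclidean :: 'a::t2_space topology)"
  unfolding Hausdorff_space_def disjnt_def by (metis open_openin separation_t2)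

lemma Cc_I:
  assumes "continuous_on UNIV f" "compact K" "\<And>x. x \<notin> K \<Longrightarrow> f x = 0"
  shows "f \<in> Cc"
  using assms unfolding Cc_def by blast

lemma Cc_cont: "f \<in> Cc \<Longrightarrow> continuous_on UNIV f"
  unfolding Cc_def by blast

lemma Cc_supp: "f \<in> Cc \<Longrightarrow> \<exists>K. compact K \<and> (\<forall>x. x \<notin> K \<longrightarrow> f x = 0)"
  unfolding Cc_def by blast

lemma urysohn_point:
  fixes Op :: "'a::t2_space set"
  assumes lc: "locally_compact_space (euclidean :: 'a topology)" and Op: "open Op" and a: "a \<in> Op"
  obtains f where "f \<in> Cc" "\<And>x. 0 \<le> f x" "\<And>x. f x \<le> 1" "f a = 1" "\<And>x. x \<notin> Op \<Longrightarrow> f x = 0"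
proof -
  obtain U K where U: "open U" "compact K" "a \<in> U" "U \<subseteq> K"
    using lc unfolding locally_compact_space_def by (metis UNIV_I compactin_euclidean_iff open_openin topspace_euclidean)
  have CR: "completely_regular_space (euclidean :: 'a topology)"
    using lc t2_Hausdorff by (intro locally_compact_regular_imp_completely_regular_space) auto
  let ?S = "- (Op \<inter> U)"
  have "closedin euclidean ?S" using Op U by (auto simp: closed_closedin[symmetric])
  moreover have "a \<in> topspace euclidean - ?S" using a U by auto
  ultimately obtain g :: "'a \<Rightarrow> real" where g: "continuous_map euclidean (top_of_set {0..1}) g" "g a = 0" "g ` ?S \<subseteq> {1}"
    using CR unfolding completely_regular_space_def by blast
  have gc: "continuous_on UNIV g" and gr: "\<And>x. g x \<in> {0..1}"
    using g(1) by (auto simp: continuous_map_in_subtopology)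
  define f where "f x = 1 - g x" for x
  have "f \<in> Cc"
  proof (rule Cc_I)
    show "continuous_on UNIV f" unfolding f_def using gc by (intro continuous_intros)
    show "compact K" by (rule U)
    fix x assume "x \<notin> K" then have "x \<in> ?S" using U by auto
    then show "f x = 0" using g(3) by (auto simp: f_def)
  qed
  moreover have "\<And>x. 0 \<le> f x" "\<And>x. f x \<le> 1" using gr by (auto simp: f_def)
  moreover have "f a = 1" using g by (simp add: f_def)
  moreover have "\<And>x. x \<notin> Op \<Longrightarrow> f x = 0" using g(3) by (auto simp: f_def)
  ultimately show ?thesis using that by blast
qed

lemma urysohn_compact:
  fixes Op :: "'a::t2_space set"
  assumes lc: "locally_compact_space (euclidean :: 'a topology)" and K: "compact K" and Op: "open Op" and KOp: "K \<subseteq> Op"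
  obtains f where "f \<in> Cc" "\<And>x. 0 \<le> f x" "\<And>x. f x \<le> 1" "\<And>x. x \<in> K \<Longrightarrow> f x = 1" "\<And>x. x \<notin> Op \<Longrightarrow> f x = 0"
proof -
  have "\<forall>k\<in>K. \<exists>f. f \<in> Cc \<and> (\<forall>x. 0 \<le> f x) \<and> (\<forall>x. f x \<le> 1) \<and> f k = 1 \<and> (\<forall>x. x \<notin> Op \<longrightarrow> f x = 0)"
  proof
    fix k assume "k \<in> K"
    then have "k \<in> Op" using KOp by auto
    from urysohn_point[OF lc Op this] show "\<exists>f. f \<in> Cc \<and> (\<forall>x. 0 \<le> f x) \<and> (\<forall>x. f x \<le> 1) \<and> f k = 1 \<and> (\<forall>x. x \<notin> Op \<longrightarrow> f x = 0)"
      by metis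
  qed
  then obtain F where F: "\<And>k. k \<in> K \<Longrightarrow> F k \<in> Cc \<and> (\<forall>x. 0 \<le> F k x) \<and> (\<forall>x. F k x \<le> 1) \<and> F k k = 1 \<and> (\<forall>x. x \<notin> Op \<longrightarrow> F k x = 0)"
    by metis
  have opn: "open {x. 1/2 < F k x}" if "k \<in> K" for k
    using open_Collect_less[OF continuous_on_const Cc_cont, of "F k" "1/2"] F[OF that] by simp
  have cov: "K \<subseteq> (\<Union>k\<in>K. {x. 1/2 < F k x})" using F by force
  obtain C where C: "C \<subseteq> K" "finite C" "K \<subseteq> (\<Union>k\<in>C. {x. 1/2 < F k x})"
    using compactE_image[OF K opn cov] by blast
  have "\<forall>k\<in>C. \<exists>L. compact L \<and> (\<forall>x. x \<notin> L \<longrightarrow> F k x = 0)"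
  proof
    fix k assume "k \<in> C"
    then have "F k \<in> Cc" using C F by blast
    then show "\<exists>L. compact L \<and> (\<forall>x. x \<notin> L \<longrightarrow> F k x = 0)" by (rule Cc_supp)
  qed
  then obtain L where L: "\<And>k. k \<in> C \<Longrightarrow> compact (L k) \<and> (\<forall>x. x \<notin> L k \<longrightarrow> F k x = 0)"
    by metis
  define f where "f x = min 1 (2 * (\<Sum>k\<in>C. F k x))" for x
  have "f \<in> Cc"
  proof (rule Cc_I)
    have "\<And>k. k \<in> C \<Longrightarrow> continuous_on UNIV (F k)"
    proof -
      fix k assume "k \<in> C"
      then have "F k \<in> Cc" using C F by blast
      then show "continuous_on UNIV (F k)" by (rule Cc_cont)
    qed
    then show "continuous_on UNIV f" unfolding f_def
      by (intro continuous_on_min continuous_on_const continuous_on_mult continuous_on_sum) auto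
    show "compact (\<Union>k\<in>C. L k)" using C L by (intro compact_UN) auto
    fix x assume "x \<notin> (\<Union>k\<in>C. L k)"
    then have "\<And>k. k \<in> C \<Longrightarrow> F k x = 0" using L by blast
    then show "f x = 0" by (simp add: f_def)
  qed
  moreover have "\<And>x. 0 \<le> f x" unfolding f_def using C F by (auto intro!: sum_nonneg)
  moreover have "\<And>x. f x \<le> 1" by (simp add: f_def)
  moreover have "f x = 1" if x: "x \<in> K" for x
  proof -
    obtain k where k: "k \<in> C" "1/2 < F k x" using C x by blast
    have "F k x \<le> (\<Sum>k\<in>C. F k x)" using C F k by (intro member_le_sum) auto
    then show ?thesis using k by (simp add: f_def)
  qed
  moreover have "\<And>x. x \<notin> Op \<Longrightarrow> f x = 0" using C F by (simp add: f_def subset_iff)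
  ultimately show ?thesis using that by blast
qed

lemma radon_le_by_Cc:
  fixes M1 M2 :: "'a::t2_space measure"
  assumes lc: "locally_compact_space (euclidean :: 'a topology)"
    and R1: "radon_measure M1" and S2: "sets M2 = sets borel"
    and inner2: "\<And>Op. open Op \<Longrightarrow> emeasure M2 Op \<le> (SUP K\<in>{K. compact K \<and> K \<subseteq> Op}. emeasure M2 K)"
    and Ccle: "\<And>f. f \<in> Cc \<Longrightarrow> (\<And>x. 0 \<le> f x) \<Longrightarrow> (\<And>x. f x \<le> 1) \<Longrightarrow>
        (\<integral>\<^sup>+ x. ennreal (f x) \<partial>M2) \<le> (\<integral>\<^sup>+ x. ennreal (f x) \<partial>M1)"
    and A: "A \<in> sets borel"
  shows "emeasure M2 A \<le> emeasure M1 A"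
proof -
  have S1: "sets M1 = sets borel" by (rule radon_sets[OF R1])
  have "emeasure M2 A \<le> (INF U \<in> {U. open U \<and> A \<subseteq> U}. emeasure M1 U)"
  proof (rule INF_greatest)
    fix U assume U: "U \<in> {U. open U \<and> A \<subseteq> U}"
    have "emeasure M2 A \<le> emeasure M2 U" using U A S2 by (intro emeasure_mono) auto
    also have "\<dots> \<le> (SUP K\<in>{K. compact K \<and> K \<subseteq> U}. emeasure M2 K)" using U inner2 by blast
    also have "\<dots> \<le> emeasure M1 U"
    proof (rule SUP_least)
      fix K assume K: "K \<in> {K. compact K \<and> K \<subseteq> U}"
      obtain f where f: "f \<in> Cc" "\<And>x. 0 \<le> f x" "\<And>x. f x \<le> 1" "\<And>x. x \<in> K \<Longrightarrow> f x = 1" "\<And>x. x \<notin> U \<Longrightarrow> f x = 0"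
        using urysohn_compact[OF lc, of K U] K U by blast
      have Ks: "K \<in> sets borel" using K by (simp add: borel_closed compact_imp_closed)
      have Us: "U \<in> sets borel" using U by simp
      have "emeasure M2 K = (\<integral>\<^sup>+ x. indicator K x \<partial>M2)" using Ks S2 by simp
      also have "\<dots> \<le> (\<integral>\<^sup>+ x. ennreal (f x) \<partial>M2)"
        by (intro nn_integral_mono) (auto simp: indicator_def f(2) f(4))
      also have "\<dots> \<le> (\<integral>\<^sup>+ x. ennreal (f x) \<partial>M1)" using f by (intro Ccle) auto
      also have "\<dots> \<le> (\<integral>\<^sup>+ x. indicator U x \<partial>M1)"
        by (intro nn_integral_mono) (auto simp: indicator_def f(3) f(5))
      also have "\<dots> = emeasure M1 U" using Us S1 by simp
      finally show "emeasure M2 K \<le> emeasure M1 U" .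
    qed
    finally show "emeasure M2 A \<le> emeasure M1 U" .
  qed
  also have "\<dots> = emeasure M1 A" using radon_outer[OF R1 A] by simp
  finally show ?thesis .
qed

locale haar_gpd =
  fixes gm :: "'a::t2_space \<Rightarrow> 'a \<Rightarrow> 'a" and gi :: "'a \<Rightarrow> 'a" and nu :: "'a \<Rightarrow> 'a measure"
  assumes lch: "lcH_groupoid gm gi" and hs: "haar_system gm gi nu"
begin

lemma grp: "groupoid gm gi" using lch by (simp add: lcH_groupoid_def)
lemma lc: "locally_compact_space (euclidean :: 'a topology)" using lch by (simp add: lcH_groupoid_def)
lemma cinv: "continuous_on UNIV gi" using lch by (simp add: lcH_groupoid_def)
lemma cmult: "continuous_on (g_comp gm gi) (\<lambda>p. gm (fst p) (snd p))" using lch by (simp add: lcH_groupoid_def)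

lemmas gp = gp_inv_inv[OF grp] gp_r_inv[OF grp] gp_d_inv[OF grp] gp_r_mult_self[OF grp] gp_mult_d_self[OF grp]
  gp_r_r[OF grp] gp_d_r[OF grp] gp_d_d[OF grp] gp_r_d[OF grp]

lemma comp_iff: "(x, y) \<in> g_comp gm gi \<longleftrightarrow> g_d gm gi x = g_r gm gi y"
  by (simp add: g_comp_def)

lemma cont_r: "continuous_on UNIV (g_r gm gi)"
proof -
  have "continuous_on UNIV (\<lambda>x. (\<lambda>p. gm (fst p) (snd p)) (x, gi x))"
    using cinv by (intro continuous_on_compose2[OF cmult]) (auto intro!: continuous_intros simp: comp_iff gp)
  then show ?thesis by (simp add: g_r_def[abs_def])
qed

lemma cont_d: "continuous_on UNIV (g_d gm gi)"
proof -
  have "continuous_on UNIV (\<lambda>x. (\<lambda>p. gm (fst p) (snd p)) (gi x, x))"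
    using cinv by (intro continuous_on_compose2[OF cmult]) (auto intro!: continuous_intros simp: comp_iff gp)
  then show ?thesis by (simp add: g_d_def[abs_def])
qed

definition fib :: "'a \<Rightarrow> 'a set" where "fib t = {w. g_r gm gi w = t}"

lemma closed_fib: "closed (fib t)"
  unfolding fib_def by (rule closed_Collect_eq[OF cont_r continuous_on_const])

lemma fib_borel[measurable]: "fib t \<in> sets borel"
  using closed_fib by simp

lemma cont_L: "continuous_on (fib (g_d gm gi z)) (gm z)"
proof -
  have "continuous_on (fib (g_d gm gi z)) (\<lambda>w. (\<lambda>p. gm (fst p) (snd p)) (z, w))"
    by (intro continuous_on_compose2[OF cmult]) (auto intro!: continuous_intros simp: comp_iff fib_def)
  then show ?thesis by simp
qed

lemma cont_R: "continuous_on {x. g_d gm gi x = g_r gm gi y} (\<lambda>x. gm x y)"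
proof -
  have "continuous_on {x. g_d gm gi x = g_r gm gi y} (\<lambda>x. (\<lambda>p. gm (fst p) (snd p)) (x, y))"
    by (intro continuous_on_compose2[OF cmult]) (auto intro!: continuous_intros simp: comp_iff)
  then show ?thesis by simp
qed

lemma units_r: "g_r gm gi x \<in> g_units gm gi" by (simp add: g_units_def)
lemma units_d: "g_d gm gi x \<in> g_units gm gi"
  using units_r[of "gi x"] gp by simp

lemma hs_radon: "t \<in> g_units gm gi \<Longrightarrow> radon_measure (nu t)"
  using hs unfolding haar_system_def by blast
lemma hs_supp: "t \<in> g_units gm gi \<Longrightarrow> msupport (nu t) = fib t"
  using hs unfolding haar_system_def fib_def by blast
lemma hs_inv: "f \<in> Cc \<Longrightarrow> (\<integral>y. f y \<partial>nu (g_r gm gi x)) = (\<integral>y. f (gm x y) \<partial>nu (g_d gm gi x))"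
  using hs unfolding haar_system_def by blast
lemma hs_cont: "f \<in> Cc \<Longrightarrow> continuous_on (g_units gm gi) (\<lambda>t. integral\<^sup>L (nu t) f)"
  using hs unfolding haar_system_def by blast

lemma sets_nu: "t \<in> g_units gm gi \<Longrightarrow> sets (nu t) = sets borel"
  using radon_sets[OF hs_radon] .
lemma space_nu: "t \<in> g_units gm gi \<Longrightarrow> space (nu t) = UNIV"
  using radon_space[OF hs_radon] .

lemma AE_fib: "t \<in> g_units gm gi \<Longrightarrow> AE x in nu t. x \<in> fib t"
  using radon_AE_msupport[OF hs_radon] hs_supp by simp

definition L :: "'a \<Rightarrow> 'a \<Rightarrow> 'a" where
  "L z w = (if w \<in> fib (g_d gm gi z) then gm z w else z)"

lemma L_meas: "L z \<in> borel_measurable borel"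
  unfolding L_def by (rule borel_measurable_continuous_on_if[OF fib_borel cont_L continuous_on_const])

lemma L_fib: "L z w \<in> fib (g_r gm gi z)"
  by (auto simp: L_def fib_def gp_r_mult[OF grp] comp_iff)

lemma meas_nu_cong: "t \<in> g_units gm gi \<Longrightarrow> measurable (nu t) N = measurable borel N"
  by (rule measurable_cong_sets[OF sets_nu refl])
lemma meas_nu_cong2: "t \<in> g_units gm gi \<Longrightarrow> measurable N (nu t) = measurable N borel"
  by (rule measurable_cong_sets[OF refl sets_nu])


lemma L_meas_nu: "L z \<in> measurable (nu (g_d gm gi z)) borel"
  by (subst meas_nu_cong[OF units_d]) (rule L_meas)

lemma L_meas_nu2: "L z \<in> measurable borel (nu (g_r gm gi z))"
  by (subst meas_nu_cong2[OF units_r]) (rule L_meas)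

lemma LL: "y \<in> fib (g_r gm gi z) \<Longrightarrow> L z (L (gi z) y) = y"
proof -
  assume y: "y \<in> fib (g_r gm gi z)"
  have c: "(gi z, y) \<in> g_comp gm gi" using y by (simp add: comp_iff fib_def gp)
  have 1: "L (gi z) y = gm (gi z) y" using y by (simp add: L_def fib_def gp)
  have "gm (gi z) y \<in> fib (g_d gm gi z)" using gp_r_mult[OF grp c] by (simp add: fib_def gp)
  then have "L z (gm (gi z) y) = gm z (gm (gi z) y)" by (simp add: L_def)
  also have "\<dots> = y" using gp_cancel_left[OF grp c] by (simp add: gp)
  finally show ?thesis using 1 by simp
qed

lemma LL2: "x \<in> fib (g_d gm gi z) \<Longrightarrow> L (gi z) (L z x) = x"
proof -
  assume x: "x \<in> fib (g_d gm gi z)"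
  have c: "(z, x) \<in> g_comp gm gi" using x by (simp add: comp_iff fib_def)
  have 1: "L z x = gm z x" using x by (simp add: L_def)
  have "gm z x \<in> fib (g_d gm gi (gi z))" using gp_r_mult[OF grp c] by (simp add: fib_def gp)
  then have "L (gi z) (gm z x) = gm (gi z) (gm z x)" by (simp add: L_def)
  also have "\<dots> = x" using gp_cancel_left[OF grp c] .
  finally show ?thesis using 1 by simp
qed

lemma Cc_eq_distr:
  assumes f: "f \<in> Cc" "\<And>x. 0 \<le> f x"
  shows "(\<integral>\<^sup>+ x. ennreal (f x) \<partial>distr (nu (g_d gm gi z)) borel (L z)) = (\<integral>\<^sup>+ x. ennreal (f x) \<partial>nu (g_r gm gi z))"
proof -
  let ?d = "g_d gm gi z" and ?r = "g_r gm gi z"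
  have ud: "?d \<in> g_units gm gi" by (rule units_d)
  have ur: "?r \<in> g_units gm gi" by (rule units_r)
  have Rd: "radon_measure (nu ?d)" by (rule hs_radon[OF ud])
  have Rr: "radon_measure (nu ?r)" by (rule hs_radon[OF ur])
  have Lm: "L z \<in> measurable (nu ?d) borel" by (rule L_meas_nu)
  have fm: "f \<in> borel_measurable borel" using Cc_cont[OF f(1)] by (rule borel_measurable_continuous_onI)
  have lhs: "(\<integral>\<^sup>+ x. ennreal (f x) \<partial>distr (nu ?d) borel (L z)) = (\<integral>\<^sup>+ w. ennreal (f (L z w)) \<partial>nu ?d)"
    by (rule nn_integral_distr[OF Lm]) (use fm in measurable)
  show ?thesis
  proof (cases "integral\<^sup>L (nu ?r) f = 0")
    case True
    have z: "\<And>x. x \<in> fib ?r \<Longrightarrow> f x = 0"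
      using Cc_zero_on_support[OF Rr f(1) f(2) True] hs_supp[OF ur] by auto
    have "(\<integral>\<^sup>+ w. ennreal (f (L z w)) \<partial>nu ?d) = 0" using z L_fib by simp
    moreover have "(\<integral>\<^sup>+ x. ennreal (f x) \<partial>nu ?r) = 0"
    proof -
      have "AE x in nu ?r. ennreal (f x) = 0" using AE_fib[OF ur] z by auto
      then have "(\<integral>\<^sup>+ x. ennreal (f x) \<partial>nu ?r) = (\<integral>\<^sup>+ x. 0 \<partial>nu ?r)" by (rule nn_integral_cong_AE)
      then show ?thesis by simp
    qed
    ultimately show ?thesis using lhs by simp
  next
    case False
    have hinv: "integral\<^sup>L (nu ?r) f = (\<integral>w. f (gm z w) \<partial>nu ?d)" using hs_inv[OF f(1)] .
    then have int1: "integrable (nu ?d) (\<lambda>w. f (gm z w))" using False not_integrable_integral_eq by metis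
    have m1: "(\<lambda>w. f (gm z w)) \<in> borel_measurable (nu ?d)" using int1 by (rule borel_measurable_integrable)
    have m2: "(\<lambda>w. f (L z w)) \<in> borel_measurable (nu ?d)" by (rule measurable_compose[OF Lm fm])
    have ae: "AE w in nu ?d. f (gm z w) = f (L z w)"
      using AE_fib[OF ud] by eventually_elim (simp add: L_def)
    have int2: "integrable (nu ?d) (\<lambda>w. f (L z w))" using integrable_cong_AE[OF m1 m2 ae] int1 by simp
    have eq: "(\<integral>w. f (gm z w) \<partial>nu ?d) = (\<integral>w. f (L z w) \<partial>nu ?d)" by (rule integral_cong_AE[OF m1 m2 ae])
    have "(\<integral>\<^sup>+ w. ennreal (f (L z w)) \<partial>nu ?d) = ennreal (\<integral>w. f (L z w) \<partial>nu ?d)"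
      using nn_integral_eq_integral[OF int2] f(2) by simp
    also have "\<dots> = ennreal (integral\<^sup>L (nu ?r) f)" using hinv eq by simp
    also have "\<dots> = (\<integral>\<^sup>+ x. ennreal (f x) \<partial>nu ?r)" using Cc_nn_integral[OF Rr f(1) f(2)] by simp
    finally show ?thesis using lhs by simp
  qed
qed

lemma distr_inner:
  assumes Op: "open Op"
  shows "emeasure (distr (nu (g_d gm gi z)) borel (L z)) Op
     \<le> (SUP K\<in>{K. compact K \<and> K \<subseteq> Op}. emeasure (distr (nu (g_d gm gi z)) borel (L z)) K)"
proof -
  let ?d = "g_d gm gi z" and ?M2 = "distr (nu (g_d gm gi z)) borel (L z)" and ?F = "fib (g_d gm gi z)"
  have ud: "?d \<in> g_units gm gi" by (rule units_d)
  have Rd: "radon_measure (nu ?d)" by (rule hs_radon[OF ud])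
  have sp: "space (nu ?d) = UNIV" by (rule space_nu[OF ud])
  obtain V where V: "open V" "V \<inter> ?F = gm z -` Op \<inter> ?F"
    using cont_L[of z] Op unfolding continuous_on_open_invariant by blast
  have Lm: "L z \<in> measurable (nu ?d) borel" by (rule L_meas_nu)
  have "emeasure ?M2 Op = emeasure (nu ?d) (L z -` Op \<inter> space (nu ?d))"
    by (rule emeasure_distr[OF Lm]) (use Op in simp)
  also have "\<dots> = emeasure (nu ?d) V"
  proof (rule emeasure_eq_AE)
    show "AE x in nu ?d. x \<in> L z -` Op \<inter> space (nu ?d) \<longleftrightarrow> x \<in> V"
      using AE_fib[OF ud]
    proof eventually_elim
      case (elim x)
      then have "x \<in> V \<longleftrightarrow> gm z x \<in> Op" using V(2) by blast
      then show ?case using elim by (simp add: L_def sp)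
    qed
    show "L z -` Op \<inter> space (nu ?d) \<in> sets (nu ?d)" using measurable_sets[OF Lm] Op by simp
    show "V \<in> sets (nu ?d)" using V sets_nu[OF ud] by simp
  qed
  also have "\<dots> = (SUP K\<in>{K. compact K \<and> K \<subseteq> V}. emeasure (nu ?d) K)" by (rule radon_inner[OF Rd V(1)])
  also have "\<dots> \<le> (SUP K\<in>{K. compact K \<and> K \<subseteq> Op}. emeasure ?M2 K)"
  proof (rule SUP_least)
    fix K assume K: "K \<in> {K. compact K \<and> K \<subseteq> V}"
    let ?K' = "gm z ` (K \<inter> ?F)"
    have cK: "compact (K \<inter> ?F)" using K closed_fib by (intro compact_Int_closed) auto
    have cK': "compact ?K'" by (rule compact_continuous_image[OF continuous_on_subset[OF cont_L] cK]) auto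
    have K'Op: "?K' \<subseteq> Op" using K V(2) by blast
    have Kb: "K \<in> sets borel" using K by (simp add: borel_closed compact_imp_closed)
    have K'b: "?K' \<in> sets borel" using cK' by (simp add: borel_closed compact_imp_closed)
    have "emeasure (nu ?d) K = emeasure (nu ?d) (K \<inter> ?F)"
    proof (rule emeasure_eq_AE)
      show "AE x in nu ?d. x \<in> K \<longleftrightarrow> x \<in> K \<inter> ?F" using AE_fib[OF ud] by eventually_elim auto
    qed (use Kb sets_nu[OF ud] in auto)
    also have "\<dots> \<le> emeasure (nu ?d) (L z -` ?K' \<inter> space (nu ?d))"
    proof (rule emeasure_mono)
      show "K \<inter> ?F \<subseteq> L z -` ?K' \<inter> space (nu ?d)" by (auto simp: L_def sp)
      show "L z -` ?K' \<inter> space (nu ?d) \<in> sets (nu ?d)" using measurable_sets[OF Lm K'b] .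
    qed
    also have "\<dots> = emeasure ?M2 ?K'" by (rule emeasure_distr[OF Lm K'b, symmetric])
    also have "\<dots> \<le> (SUP K\<in>{K. compact K \<and> K \<subseteq> Op}. emeasure ?M2 K)"
      by (rule SUP_upper) (use cK' K'Op in auto)
    finally show "emeasure (nu ?d) K \<le> (SUP K\<in>{K. compact K \<and> K \<subseteq> Op}. emeasure ?M2 K)" .
  qed
  finally show ?thesis .
qed

lemma distr_le:
  assumes A: "A \<in> sets borel"
  shows "emeasure (distr (nu (g_d gm gi z)) borel (L z)) A \<le> emeasure (nu (g_r gm gi z)) A"
proof (rule radon_le_by_Cc[OF lc hs_radon[OF units_r]])
  show "sets (distr (nu (g_d gm gi z)) borel (L z)) = sets borel" by simp
  show "\<And>Op. open Op \<Longrightarrow> emeasure (distr (nu (g_d gm gi z)) borel (L z)) Op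
     \<le> (SUP K\<in>{K. compact K \<and> K \<subseteq> Op}. emeasure (distr (nu (g_d gm gi z)) borel (L z)) K)"
    by (rule distr_inner)
  show "\<And>f. f \<in> Cc \<Longrightarrow> (\<And>x. 0 \<le> f x) \<Longrightarrow> (\<And>x. f x \<le> 1) \<Longrightarrow>
        (\<integral>\<^sup>+ x. ennreal (f x) \<partial>distr (nu (g_d gm gi z)) borel (L z)) \<le> (\<integral>\<^sup>+ x. ennreal (f x) \<partial>nu (g_r gm gi z))"
    using Cc_eq_distr by simp
qed (rule A)

lemma haar_distr: "distr (nu (g_d gm gi z)) borel (L z) = nu (g_r gm gi z)"
proof (rule measure_eqI)
  let ?d = "g_d gm gi z" and ?r = "g_r gm gi z"
  have ud: "?d \<in> g_units gm gi" by (rule units_d)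
  have ur: "?r \<in> g_units gm gi" by (rule units_r)
  show "sets (distr (nu ?d) borel (L z)) = sets (nu ?r)" using sets_nu[OF ur] by simp
  fix A assume "A \<in> sets (distr (nu ?d) borel (L z))"
  then have A: "A \<in> sets borel" by simp
  show "emeasure (distr (nu ?d) borel (L z)) A = emeasure (nu ?r) A"
  proof (rule antisym)
    show "emeasure (distr (nu ?d) borel (L z)) A \<le> emeasure (nu ?r) A" by (rule distr_le[OF A])
    have B: "L z -` A \<in> sets borel" using measurable_sets[OF L_meas A] by simp
    have B2: "L (gi z) -` (L z -` A) \<in> sets borel" using measurable_sets[OF L_meas B] by simp
    have "emeasure (nu ?r) A = emeasure (nu ?r) (A \<inter> fib ?r)"
    proof (rule emeasure_eq_AE)
      show "AE x in nu ?r. x \<in> A \<longleftrightarrow> x \<in> A \<inter> fib ?r" using AE_fib[OF ur] by eventually_elim auto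
    qed (use A sets_nu[OF ur] in auto)
    also have "\<dots> \<le> emeasure (nu ?r) (L (gi z) -` (L z -` A))"
    proof (rule emeasure_mono)
      show "A \<inter> fib ?r \<subseteq> L (gi z) -` (L z -` A)" using LL by auto
    qed (use B2 sets_nu[OF ur] in auto)
    also have "\<dots> = emeasure (distr (nu (g_d gm gi (gi z))) borel (L (gi z))) (L z -` A)"
      using emeasure_distr[OF L_meas_nu[of "gi z"] B] space_nu[OF units_d[of "gi z"]] by (simp add: gp)
    also have "\<dots> \<le> emeasure (nu (g_r gm gi (gi z))) (L z -` A)" by (rule distr_le[OF B])
    also have "\<dots> = emeasure (distr (nu ?d) borel (L z)) A"
      using emeasure_distr[OF L_meas_nu[of z] A] space_nu[OF ud] by (simp add: gp)
    finally show "emeasure (nu ?r) A \<le> emeasure (distr (nu ?d) borel (L z)) A" .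
  qed
qed

lemma haar_transport:
  "integral\<^sup>N (nu (g_r gm gi z)) F = (\<integral>\<^sup>+ w. F (L z w) \<partial>nu (g_d gm gi z))"
proof -
  let ?d = "g_d gm gi z" and ?r = "g_r gm gi z"
  have "integral\<^sup>N (distr (nu ?d) borel (L z)) F = (\<integral>\<^sup>+ w. F (L z w) \<partial>nu ?d)"
  proof (rule nn_integral_transport[where T'="L (gi z)" and D="fib ?r"])
    show "L z \<in> measurable (nu ?d) borel" by (rule L_meas_nu)
    show "L (gi z) \<in> measurable borel (nu ?d)" using L_meas_nu2[of "gi z"] by (simp add: gp)
    show "fib ?r \<in> sets borel" by simp
    show "\<And>y. y \<in> fib ?r \<Longrightarrow> L z (L (gi z) y) = y" by (rule LL)
    show "AE x in nu ?d. L z x \<in> fib ?r \<and> L (gi z) (L z x) = x"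
      using AE_fib[OF units_d[of z]] by eventually_elim (simp add: L_fib LL2)
  qed
  then show ?thesis using haar_distr by simp
qed

lemma lower_transport:
  assumes t: "t \<in> g_units gm gi"
  shows "integral\<^sup>N (haar_lower gi nu t) F = (\<integral>\<^sup>+ w. F (gi w) \<partial>nu t)"
  unfolding haar_lower_def
proof (rule nn_integral_transport[where T'=gi and D=UNIV])
  have gm: "gi \<in> borel_measurable borel" by (rule borel_measurable_continuous_onI[OF cinv])
  show "gi \<in> measurable (nu t) borel" by (subst meas_nu_cong[OF t]) (rule gm)
  show "gi \<in> measurable borel (nu t)" by (subst meas_nu_cong2[OF t]) (rule gm)
qed (auto simp: gp)


lemma right_transport:
  "integral\<^sup>N (haar_lower gi nu (g_d gm gi x0)) F = (\<integral>\<^sup>+ x. F (gm x x0) \<partial>haar_lower gi nu (g_r gm gi x0))"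
proof -
  have "integral\<^sup>N (haar_lower gi nu (g_d gm gi x0)) F = (\<integral>\<^sup>+ w. F (gi w) \<partial>nu (g_d gm gi x0))"
    by (rule lower_transport[OF units_d])
  also have "\<dots> = (\<integral>\<^sup>+ w. F (gi w) \<partial>nu (g_r gm gi (gi x0)))" by (simp add: gp)
  also have "\<dots> = (\<integral>\<^sup>+ w. F (gi (L (gi x0) w)) \<partial>nu (g_d gm gi (gi x0)))"
    by (rule haar_transport)
  also have "\<dots> = (\<integral>\<^sup>+ w. F (gi (L (gi x0) w)) \<partial>nu (g_r gm gi x0))" by (simp add: gp)
  also have "\<dots> = (\<integral>\<^sup>+ w. F (gm (gi w) x0) \<partial>nu (g_r gm gi x0))"
  proof (rule nn_integral_cong_AE)
    show "AE w in nu (g_r gm gi x0). F (gi (L (gi x0) w)) = F (gm (gi w) x0)"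
      using AE_fib[OF units_r[of x0]]
    proof eventually_elim
      case (elim w)
      then have c: "(gi x0, w) \<in> g_comp gm gi" by (simp add: comp_iff fib_def gp)
      have "L (gi x0) w = gm (gi x0) w" using elim by (simp add: L_def fib_def gp)
      then show ?case using gp_inv_mult[OF grp c] by (simp add: gp)
    qed
  qed
  also have "\<dots> = (\<integral>\<^sup>+ x. F (gm x x0) \<partial>haar_lower gi nu (g_r gm gi x0))"
    by (rule lower_transport[OF units_r, symmetric])
  finally show ?thesis .
qed

lemma AE_lower:
  assumes t: "t \<in> g_units gm gi"
  shows "AE x in haar_lower gi nu t. g_d gm gi x = t"
proof -
  have gm: "gi \<in> measurable (nu t) borel"
    by (subst meas_nu_cong[OF t]) (rule borel_measurable_continuous_onI[OF cinv])
  have cl: "closed {x. g_d gm gi x = t}" by (rule closed_Collect_eq[OF cont_d continuous_on_const])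
  have "AE x in nu t. g_d gm gi (gi x) = t" using AE_fib[OF t] by eventually_elim (simp add: fib_def gp)
  then show ?thesis unfolding haar_lower_def
    using cl gm by (subst AE_distr_iff) auto
qed

end

lemma meas_piece:
  fixes Theta :: "'x::topological_space \<Rightarrow> 'y::topological_space"
  assumes C: "closed C" and cont: "continuous_on C Theta" and h: "h \<in> borel_measurable borel"
  shows "(\<lambda>p. if p \<in> C then h (Theta p) else (0::real)) \<in> borel_measurable borel"
proof -
  have "{x \<in> space borel. x \<in> C} \<in> sets borel" using C by simp
  moreover have "(\<lambda>p. h (Theta p)) \<in> borel_measurable (restrict_space borel {x. x \<in> C})"
    using measurable_compose[OF borel_measurable_continuous_on_restrict[OF cont] h] by simp
  ultimately show ?thesis by (subst measurable_If_restrict_space_iff) auto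
qed

locale morph = G: haar_gpd multG invG nu + Ga: haar_gpd multGa invGa lam
  for multG :: "'a::t2_space \<Rightarrow> 'a \<Rightarrow> 'a" and invG nu and multGa :: "'g::t2_space \<Rightarrow> 'g \<Rightarrow> 'g" and invGa lam +
  fixes rho :: "'a \<Rightarrow> 'g" and act :: "'g \<Rightarrow> 'a \<Rightarrow> 'a" and Delta :: "'a \<Rightarrow> 'g \<Rightarrow> real"
  assumes hm: "haar_morphism multGa invGa lam multG invG nu rho act Delta"
begin

definition sig :: "'a \<Rightarrow> 'g" where "sig x = rho (g_r multG invG x)"
definition SD :: "('a \<times> 'g) set" where "SD = semidirect_h multGa invGa multG invG rho"
definition Phi :: "'a \<times> 'g \<Rightarrow> 'a \<times> 'g" where "Phi p = (act (invGa (snd p)) (fst p), invGa (snd p))"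

lemma SD_iff: "p \<in> SD \<longleftrightarrow> sig (fst p) = g_r multGa invGa (snd p)"
  by (cases p) (simp add: SD_def semidirect_h_def sig_def)

lemma star_iff: "(\<gamma>, x) \<in> star_h multGa invGa multG invG rho \<longleftrightarrow> g_d multGa invGa \<gamma> = sig x"
  by (simp add: star_h_def sig_def)

lemma cm: "continuous_morphism multGa invGa multG invG rho act"
  using hm by (simp add: haar_morphism_def)
lemma mm: "morphism_modular multGa invGa lam multG invG nu rho act Delta"
  using hm by (simp add: haar_morphism_def)

lemma cm_D:
  shows "rho ` g_units multG invG \<subseteq> g_units multGa invGa"
    and "continuous_on (g_units multG invG) rho"
    and "continuous_on (star_h multGa invGa multG invG rho) (\<lambda>p. act (fst p) (snd p))"
    and "\<forall>(\<gamma>, x) \<in> star_h multGa invGa multG invG rho.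
        rho (g_r multG invG (act \<gamma> x)) = g_r multGa invGa \<gamma>"
    and "\<forall>x. act (rho (g_r multG invG x)) x = x"
    and "\<forall>\<gamma>1 \<gamma>2 x. (\<gamma>1, \<gamma>2) \<in> g_comp multGa invGa \<and>
          (\<gamma>2, x) \<in> star_h multGa invGa multG invG rho \<longrightarrow>
          act (multGa \<gamma>1 \<gamma>2) x = act \<gamma>1 (act \<gamma>2 x)"
    and "\<forall>(\<gamma>, x) \<in> star_h multGa invGa multG invG rho.
        g_d multG invG (act \<gamma> x) = g_d multG invG x"
    and "\<forall>\<gamma> x1 x2. (\<gamma>, x1) \<in> star_h multGa invGa multG invG rho \<and>
          (x1, x2) \<in> g_comp multG invG \<longrightarrow>
          multG (act \<gamma> x1) x2 = act \<gamma> (multG x1 x2)"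
proof -
  note h = cm[unfolded continuous_morphism_def]
  show "rho ` g_units multG invG \<subseteq> g_units multGa invGa" using h by (rule conjunct1)
  note h = h[THEN conjunct2]
  show "continuous_on (g_units multG invG) rho" using h by (rule conjunct1)
  note h = h[THEN conjunct2]
  show "continuous_on (star_h multGa invGa multG invG rho) (\<lambda>p. act (fst p) (snd p))" using h by (rule conjunct1)
  note h = h[THEN conjunct2]
  show "\<forall>(\<gamma>, x) \<in> star_h multGa invGa multG invG rho.
        rho (g_r multG invG (act \<gamma> x)) = g_r multGa invGa \<gamma>" using h by (rule conjunct1)
  note h = h[THEN conjunct2]
  show "\<forall>x. act (rho (g_r multG invG x)) x = x" using h by (rule conjunct1)
  note h = h[THEN conjunct2]
  show "\<forall>\<gamma>1 \<gamma>2 x. (\<gamma>1, \<gamma>2) \<in> g_comp multGa invGa \<and>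
          (\<gamma>2, x) \<in> star_h multGa invGa multG invG rho \<longrightarrow>
          act (multGa \<gamma>1 \<gamma>2) x = act \<gamma>1 (act \<gamma>2 x)" using h by (rule conjunct1)
  note h = h[THEN conjunct2]
  show "\<forall>(\<gamma>, x) \<in> star_h multGa invGa multG invG rho.
        g_d multG invG (act \<gamma> x) = g_d multG invG x" using h by (rule conjunct1)
  show "\<forall>\<gamma> x1 x2. (\<gamma>, x1) \<in> star_h multGa invGa multG invG rho \<and>
          (x1, x2) \<in> g_comp multG invG \<longrightarrow>
          multG (act \<gamma> x1) x2 = act \<gamma> (multG x1 x2)" using h by (rule conjunct2)
qed

lemma rho_units: "x \<in> g_units multG invG \<Longrightarrow> rho x \<in> g_units multGa invGa"
  using cm_D(1) by blast
lemma cont_rho: "continuous_on (g_units multG invG) rho"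
  by (rule cm_D(2))
lemma cont_act: "continuous_on (star_h multGa invGa multG invG rho) (\<lambda>p. act (fst p) (snd p))"
  by (rule cm_D(3))
lemma act_r: "g_d multGa invGa \<gamma> = sig x \<Longrightarrow> sig (act \<gamma> x) = g_r multGa invGa \<gamma>"
  using cm_D(4) unfolding star_iff[symmetric] sig_def by (auto simp: star_h_def)
lemma act_unit: "act (sig x) x = x"
  using cm_D(5) unfolding sig_def by blast
lemma act_mult: "(\<gamma>1, \<gamma>2) \<in> g_comp multGa invGa \<Longrightarrow> g_d multGa invGa \<gamma>2 = sig x \<Longrightarrow>
    act (multGa \<gamma>1 \<gamma>2) x = act \<gamma>1 (act \<gamma>2 x)"
  using cm_D(6) unfolding star_iff[symmetric] by blast
lemma act_d: "g_d multGa invGa \<gamma> = sig x \<Longrightarrow> g_d multG invG (act \<gamma> x) = g_d multG invG x"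
  using cm_D(7) unfolding sig_def by (auto simp: star_h_def)
lemma act_right: "g_d multGa invGa \<gamma> = sig x1 \<Longrightarrow> (x1, x2) \<in> g_comp multG invG \<Longrightarrow>
    multG (act \<gamma> x1) x2 = act \<gamma> (multG x1 x2)"
  using cm_D(8) unfolding star_iff[symmetric] by blast

lemma cont_Delta: "continuous_on SD (\<lambda>p. Delta (fst p) (snd p))"
  using mm[unfolded morphism_modular_def, THEN conjunct1] unfolding SD_def .
lemma Delta_pos: "p \<in> SD \<Longrightarrow> Delta (fst p) (snd p) > 0"
  using mm[unfolded morphism_modular_def, THEN conjunct2, THEN conjunct1] unfolding SD_def by (cases p) auto
lemma mod6: "t \<in> g_units multG invG \<Longrightarrow> g \<in> borel_measurable (restrict_space borel SD) \<Longrightarrow> (\<And>p. g p \<ge> 0) \<Longrightarrow>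
        (\<integral>\<^sup>+ x. (\<integral>\<^sup>+ \<gamma>. ennreal (g (act (invGa \<gamma>) x, invGa \<gamma>) *
                                   Delta (act (invGa \<gamma>) x) (invGa \<gamma>))
                    \<partial>lam (sig x)) \<partial>haar_lower invG nu t)
        = (\<integral>\<^sup>+ x. (\<integral>\<^sup>+ \<gamma>. ennreal (g (x, \<gamma>)) \<partial>lam (sig x))
              \<partial>haar_lower invG nu t)"
proof -
  assume t: "t \<in> g_units multG invG" and g: "g \<in> borel_measurable (restrict_space borel SD)" and nn: "\<And>p. g p \<ge> 0"
  note h = mm[unfolded morphism_modular_def, THEN conjunct2, THEN conjunct2, rule_format, OF t]
  show ?thesis using h[of g] g nn unfolding SD_def sig_def by blast
qed

lemma sig_units: "sig x \<in> g_units multGa invGa"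
  unfolding sig_def by (rule rho_units[OF G.units_r])

lemma sig_rmult: "(x, y) \<in> g_comp multG invG \<Longrightarrow> sig (multG x y) = sig x"
  by (simp add: sig_def gp_r_mult[OF G.grp])

lemma cont_sig: "continuous_on UNIV sig"
  unfolding sig_def[abs_def]
  by (rule continuous_on_compose2[OF cont_rho G.cont_r]) (auto simp: G.units_r)

lemma closed_SD: "closed SD"
proof -
  have "SD = {p. sig (fst p) = g_r multGa invGa (snd p)}" by (auto simp: SD_iff)
  moreover have "closed {p. sig (fst p) = g_r multGa invGa (snd p)}"
    by (rule closed_Collect_eq)
       (auto intro!: continuous_on_compose2[OF cont_sig] continuous_on_compose2[OF Ga.cont_r] continuous_intros)
  ultimately show ?thesis by simp
qed

lemma Phi_SD: "p \<in> SD \<Longrightarrow> Phi p \<in> SD"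
  by (cases p) (auto simp: SD_iff Phi_def act_r Ga.gp)

lemma Phi_Phi: "p \<in> SD \<Longrightarrow> Phi (Phi p) = p"
proof (cases p)
  case (Pair x \<gamma>)
  assume "p \<in> SD"
  then have s: "sig x = g_r multGa invGa \<gamma>" using Pair by (simp add: SD_iff)
  have c: "(\<gamma>, invGa \<gamma>) \<in> g_comp multGa invGa" by (rule gp_comp_inv1[OF Ga.grp])
  have "act \<gamma> (act (invGa \<gamma>) x) = act (multGa \<gamma> (invGa \<gamma>)) x"
    using act_mult[OF c] s by (simp add: Ga.gp)
  also have "\<dots> = x" using act_unit[of x] s by (simp add: g_r_def)
  finally show ?thesis using Pair by (simp add: Phi_def Ga.gp)
qed

lemma Phi_d: "p \<in> SD \<Longrightarrow> g_d multG invG (fst (Phi p)) = g_d multG invG (fst p)"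
  by (cases p) (auto simp: SD_iff Phi_def act_d Ga.gp)

lemma cont_Phi: "continuous_on SD Phi"
proof -
  have "continuous_on SD (\<lambda>p. (\<lambda>q. act (fst q) (snd q)) (invGa (snd p), fst p))"
    by (rule continuous_on_compose2[OF cont_act])
       (auto simp: star_iff SD_iff Ga.gp intro!: continuous_intros continuous_on_compose2[OF Ga.cinv])
  moreover have "continuous_on SD (\<lambda>p. invGa (snd p))"
    by (auto intro!: continuous_intros continuous_on_compose2[OF Ga.cinv])
  ultimately show ?thesis unfolding Phi_def by (auto intro: continuous_on_Pair)
qed

lemma AE_SD: "AE \<gamma> in lam (sig x). (x, \<gamma>) \<in> SD"
  using Ga.AE_fib[OF sig_units[of x]] by eventually_elim (simp add: SD_iff Ga.fib_def)

lemma sets_lam: "sets (lam (sig x)) = sets borel"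
  by (rule Ga.sets_nu[OF sig_units])

end

lemma box_cmp:
  fixes E :: "('a::topological_space \<times> 'b::topological_space) set"
  assumes p0: "p0 \<in> E" and cP: "continuous_on E P" and cQ: "continuous_on E Q"
    and Qp: "Q p0 > 0" and PQ: "P p0 > Q p0"
  obtains c U W where "c > (1::real)" "open U" "open W" "p0 \<in> U \<times> W" "\<And>p. p \<in> (U \<times> W) \<inter> E \<Longrightarrow> P p > c * Q p"
proof -
  define c where "c = (P p0 + Q p0) / (2 * Q p0)"
  have c1: "c > 1" using Qp PQ by (simp add: c_def field_simps)
  have cPQ: "P p0 - c * Q p0 > 0" using Qp PQ by (simp add: c_def field_simps)
  have ck: "continuous_on E (\<lambda>p. P p - c * Q p)" using cP cQ by (intro continuous_intros)
  obtain A where A: "open A" "A \<inter> E = (\<lambda>p. P p - c * Q p) -` {0<..} \<inter> E"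
    using ck unfolding continuous_on_open_invariant by (metis open_greaterThan)
  have "p0 \<in> A" using A(2) p0 cPQ by blast
  then obtain U W where UW: "open U" "open W" "p0 \<in> U \<times> W" "U \<times> W \<subseteq> A"
    using A(1) by (metis open_prod_elim)
  have "P p > c * Q p" if p: "p \<in> (U \<times> W) \<inter> E" for p
  proof -
    have "p \<in> A \<inter> E" using p UW(4) by blast
    then have "p \<in> (\<lambda>p. P p - c * Q p) -` {0<..}" using A(2) by blast
    then show ?thesis by simp
  qed
  then show ?thesis using that c1 UW by blast
qed

lemma ennreal_contra:
  fixes X :: ennreal and c :: real
  assumes "0 < X" "X < \<infinity>" "c > 1" "X \<le> ennreal (1/c) * X"
  shows False
proof -
  obtain x where x: "X = ennreal x" "x \<ge> 0" using assms(2) by (cases X) auto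
  have xp: "x > 0" using assms(1) x by (auto simp: ennreal_eq_0_iff)
  have e: "ennreal (1/c) * ennreal x = ennreal (1/c * x)" using x assms(3) by (subst ennreal_mult[symmetric]) auto
  have "ennreal x \<le> ennreal (1/c * x)" using assms(4) x e by simp
  then have "x \<le> 1/c * x" using xp assms(3) by (subst (asm) ennreal_le_iff) auto
  moreover have "1/c * x < x" using xp assms(3) by (simp add: field_simps)
  ultimately show False by simp
qed

lemma ind_div_meas:
  fixes B :: "('a::topological_space \<times> 'b::topological_space) set"
  assumes "open B"
  shows "(\<lambda>q::('a \<times> 'b) \<times> real. indicator B (fst q) / snd q) \<in> borel_measurable borel"
proof -
  have f1: "(fst :: ('a \<times> 'b) \<times> real \<Rightarrow> 'a \<times> 'b) \<in> borel_measurable borel"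
    by (rule borel_measurable_continuous_onI) (intro continuous_intros)
  have f2: "(snd :: ('a \<times> 'b) \<times> real \<Rightarrow> real) \<in> borel_measurable borel"
    by (rule borel_measurable_continuous_onI) (intro continuous_intros)
  have f3: "(\<lambda>q::('a \<times> 'b) \<times> real. indicator B (fst q) :: real) \<in> borel_measurable borel"
    using measurable_compose[OF f1 borel_measurable_indicator[of B borel]] assms by simp
  show ?thesis using borel_measurable_divide[OF f3 f2] .
qed

context morph
begin

definition h1 :: "'a set \<Rightarrow> 'g set \<Rightarrow> 'a \<times> 'g \<Rightarrow> real" where
  "h1 U W p = (if p \<in> SD then indicator (U \<times> W) (Phi p) / Delta (fst p) (snd p) else 0)"

definition Xv :: "'a \<Rightarrow> 'a set \<Rightarrow> 'g set \<Rightarrow> ennreal" where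
  "Xv t U W = (\<integral>\<^sup>+ x. indicator U x * emeasure (lam (sig x)) W \<partial>haar_lower invG nu t)"

lemma h1_meas:
  assumes "open U" "open W"
  shows "h1 U W \<in> borel_measurable borel"
proof -
  have e: "h1 U W = (\<lambda>p. if p \<in> SD then (\<lambda>q. indicator (U \<times> W) (fst q) / snd q) ((\<lambda>p. (Phi p, Delta (fst p) (snd p))) p) else 0)"
    by (simp add: h1_def fun_eq_iff)
  have c: "continuous_on SD (\<lambda>p. (Phi p, Delta (fst p) (snd p)))"
    by (intro continuous_on_Pair cont_Phi cont_Delta)
  show ?thesis unfolding e
    by (rule meas_piece[OF closed_SD c ind_div_meas]) (use assms in \<open>auto intro: open_Times\<close>)
qed

lemma h1_nn: "h1 U W p \<ge> 0"
  using Delta_pos[of p] by (auto simp: h1_def intro!: divide_nonneg_pos)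

lemma inner_A:
  assumes W: "open W"
  shows "(\<integral>\<^sup>+ \<gamma>. ennreal (h1 U W (act (invGa \<gamma>) x, invGa \<gamma>) * Delta (act (invGa \<gamma>) x) (invGa \<gamma>)) \<partial>lam (sig x))
     = indicator U x * emeasure (lam (sig x)) W"
proof -
  have "(\<integral>\<^sup>+ \<gamma>. ennreal (h1 U W (act (invGa \<gamma>) x, invGa \<gamma>) * Delta (act (invGa \<gamma>) x) (invGa \<gamma>)) \<partial>lam (sig x))
      = (\<integral>\<^sup>+ \<gamma>. indicator U x * indicator W \<gamma> \<partial>lam (sig x))"
  proof (rule nn_integral_cong_AE)
    show "AE \<gamma> in lam (sig x). ennreal (h1 U W (act (invGa \<gamma>) x, invGa \<gamma>) * Delta (act (invGa \<gamma>) x) (invGa \<gamma>))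
        = indicator U x * indicator W \<gamma>"
      using AE_SD[of x]
    proof eventually_elim
      case (elim \<gamma>)
      let ?p = "(x, \<gamma>)"
      have pp: "Phi ?p = (act (invGa \<gamma>) x, invGa \<gamma>)" by (simp add: Phi_def)
      have s: "Phi ?p \<in> SD" by (rule Phi_SD[OF elim])
      have pos: "Delta (act (invGa \<gamma>) x) (invGa \<gamma>) > 0" using Delta_pos[OF s] pp by simp
      have "h1 U W (act (invGa \<gamma>) x, invGa \<gamma>) = indicator (U \<times> W) ?p / Delta (act (invGa \<gamma>) x) (invGa \<gamma>)"
        using s Phi_Phi[OF elim] pp by (simp add: h1_def)
      then have "h1 U W (act (invGa \<gamma>) x, invGa \<gamma>) * Delta (act (invGa \<gamma>) x) (invGa \<gamma>) = indicator (U \<times> W) ?p"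
        using pos by simp
      then show ?case by (simp add: indicator_def)
    qed
  qed
  also have "\<dots> = indicator U x * emeasure (lam (sig x)) W"
    using W sets_lam[of x] by (subst nn_integral_cmult_indicator) auto
  finally show ?thesis .
qed

lemma lemA:
  assumes t: "t \<in> g_units multG invG" and U: "open U" and W: "open W"
  shows "Xv t U W = (\<integral>\<^sup>+ x. (\<integral>\<^sup>+ \<gamma>. ennreal (h1 U W (x, \<gamma>)) \<partial>lam (sig x)) \<partial>haar_lower invG nu t)"
proof -
  have m: "h1 U W \<in> borel_measurable (restrict_space borel SD)"
    by (rule measurable_restrict_space1[OF h1_meas[OF U W]])
  note e = mod6[OF t m h1_nn]
  show ?thesis unfolding Xv_def e[symmetric] inner_A[OF W] ..
qed


definition C2 :: "'a \<Rightarrow> ('a \<times> 'g) set" where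
  "C2 x0 = SD \<inter> {p. g_d multG invG (fst p) = g_d multG invG x0}"

definition g2 :: "'a \<Rightarrow> 'a set \<Rightarrow> 'g set \<Rightarrow> 'a \<times> 'g \<Rightarrow> real" where
  "g2 x0 U W p = (if p \<in> C2 x0 then indicator (U \<times> W) (Phi (multG (fst p) (invG x0), snd p)) / Delta (fst p) (snd p) else 0)"

definition h2 :: "'a \<Rightarrow> 'a set \<Rightarrow> 'g set \<Rightarrow> 'a \<times> 'g \<Rightarrow> real" where
  "h2 x0 U W p = indicator (U \<times> W) (Phi p) / Delta (multG (fst p) x0) (snd p)"

lemma closed_C2: "closed (C2 x0)"
proof -
  have "closed {p::'a \<times> 'g. g_d multG invG (fst p) = g_d multG invG x0}"
    by (rule closed_Collect_eq) (auto intro!: continuous_on_compose2[OF G.cont_d] continuous_intros)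
  then show ?thesis unfolding C2_def using closed_SD by (intro closed_Int) auto
qed

lemma g2_meas:
  assumes "open U" "open W"
  shows "g2 x0 U W \<in> borel_measurable borel"
proof -
  let ?Rm = "\<lambda>p. (multG (fst p) (invG x0), snd p)"
  have e: "g2 x0 U W = (\<lambda>p. if p \<in> C2 x0 then (\<lambda>q. indicator (U \<times> W) (fst q) / snd q)
       ((\<lambda>p. (Phi (?Rm p), Delta (fst p) (snd p))) p) else 0)"
    by (simp add: g2_def fun_eq_iff)
  have cR: "continuous_on (C2 x0) ?Rm"
    by (intro continuous_on_Pair continuous_on_compose2[OF G.cont_R[of "invG x0"]] continuous_intros)
       (auto simp: C2_def G.gp)
  have RSD: "?Rm ` C2 x0 \<subseteq> SD"
  proof
    fix q assume "q \<in> ?Rm ` C2 x0"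
    then obtain p where p: "p \<in> C2 x0" "q = ?Rm p" by blast
    have "(fst p, invG x0) \<in> g_comp multG invG" using p by (simp add: C2_def G.comp_iff G.gp)
    then show "q \<in> SD" using p sig_rmult by (simp add: C2_def SD_iff)
  qed
  have c: "continuous_on (C2 x0) (\<lambda>p. (Phi (?Rm p), Delta (fst p) (snd p)))"
    by (intro continuous_on_Pair continuous_on_compose2[OF cont_Phi cR RSD]
        continuous_on_subset[OF cont_Delta]) (auto simp: C2_def)
  show ?thesis unfolding e
    by (rule meas_piece[OF closed_C2 c ind_div_meas]) (use assms in \<open>auto intro: open_Times\<close>)
qed

lemma g2_nn: "g2 x0 U W p \<ge> 0"
  using Delta_pos[of p] by (auto simp: g2_def C2_def intro!: divide_nonneg_pos)

lemma inner_B: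
  assumes W: "open W" and x': "g_d multG invG x' = g_d multG invG x0"
  shows "(\<integral>\<^sup>+ \<gamma>. ennreal (g2 x0 U W (act (invGa \<gamma>) x', invGa \<gamma>) * Delta (act (invGa \<gamma>) x') (invGa \<gamma>)) \<partial>lam (sig x'))
     = indicator U (multG x' (invG x0)) * emeasure (lam (sig x')) W"
proof -
  let ?y = "multG x' (invG x0)"
  have cy: "(x', invG x0) \<in> g_comp multG invG" using x' by (simp add: G.comp_iff G.gp)
  have "(\<integral>\<^sup>+ \<gamma>. ennreal (g2 x0 U W (act (invGa \<gamma>) x', invGa \<gamma>) * Delta (act (invGa \<gamma>) x') (invGa \<gamma>)) \<partial>lam (sig x'))
      = (\<integral>\<^sup>+ \<gamma>. indicator U ?y * indicator W \<gamma> \<partial>lam (sig x'))"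
  proof (rule nn_integral_cong_AE)
    show "AE \<gamma> in lam (sig x'). ennreal (g2 x0 U W (act (invGa \<gamma>) x', invGa \<gamma>) * Delta (act (invGa \<gamma>) x') (invGa \<gamma>))
        = indicator U ?y * indicator W \<gamma>"
      using AE_SD[of x']
    proof eventually_elim
      case (elim \<gamma>)
      let ?p = "(x', \<gamma>)"
      have pp: "Phi ?p = (act (invGa \<gamma>) x', invGa \<gamma>)" by (simp add: Phi_def)
      have s: "Phi ?p \<in> SD" by (rule Phi_SD[OF elim])
      have dq: "g_d multG invG (act (invGa \<gamma>) x') = g_d multG invG x0"
        using Phi_d[OF elim] pp x' by simp
      have inC: "(act (invGa \<gamma>) x', invGa \<gamma>) \<in> C2 x0" using s pp dq by (simp add: C2_def)
      have pos: "Delta (act (invGa \<gamma>) x') (invGa \<gamma>) > 0" using Delta_pos[OF s] pp by simp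
      have sg: "sig x' = g_r multGa invGa \<gamma>" using elim by (simp add: SD_iff)
      have ar: "multG (act (invGa \<gamma>) x') (invG x0) = act (invGa \<gamma>) ?y"
        using act_right[OF _ cy] sg by (simp add: Ga.gp)
      have ySD: "(?y, \<gamma>) \<in> SD" using elim sig_rmult[OF cy] by (simp add: SD_iff)
      have "Phi (multG (act (invGa \<gamma>) x') (invG x0), invGa \<gamma>) = Phi (Phi (?y, \<gamma>))"
        using ar by (simp add: Phi_def)
      also have "\<dots> = (?y, \<gamma>)" by (rule Phi_Phi[OF ySD])
      finally have "g2 x0 U W (act (invGa \<gamma>) x', invGa \<gamma>) = indicator (U \<times> W) (?y, \<gamma>) / Delta (act (invGa \<gamma>) x') (invGa \<gamma>)"
        using inC by (simp add: g2_def)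
      then have "g2 x0 U W (act (invGa \<gamma>) x', invGa \<gamma>) * Delta (act (invGa \<gamma>) x') (invGa \<gamma>) = indicator (U \<times> W) (?y, \<gamma>)"
        using pos by simp
      then show ?case by (simp add: indicator_def)
    qed
  qed
  also have "\<dots> = indicator U ?y * emeasure (lam (sig x')) W"
    using W sets_lam[of x'] by (subst nn_integral_cmult_indicator) auto
  finally show ?thesis .
qed

lemma lemB:
  assumes U: "open U" and W: "open W"
  shows "Xv (g_r multG invG x0) U W =
     (\<integral>\<^sup>+ x. (\<integral>\<^sup>+ \<gamma>. ennreal (h2 x0 U W (x, \<gamma>)) \<partial>lam (sig x)) \<partial>haar_lower invG nu (g_r multG invG x0))"
proof -
  let ?t = "g_r multG invG x0" and ?s = "g_d multG invG x0"
  define F where "F x' = indicator U (multG x' (invG x0)) * emeasure (lam (sig x')) W" for x'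
  have m: "g2 x0 U W \<in> borel_measurable (restrict_space borel SD)"
    by (rule measurable_restrict_space1[OF g2_meas[OF U W]])
  note e = mod6[OF G.units_d[of x0] m g2_nn]
  have "Xv ?t U W = (\<integral>\<^sup>+ x. F (multG x x0) \<partial>haar_lower invG nu ?t)"
    unfolding Xv_def
  proof (rule nn_integral_cong_AE)
    show "AE x in haar_lower invG nu ?t. indicator U x * emeasure (lam (sig x)) W = F (multG x x0)"
      using G.AE_lower[OF G.units_r[of x0]]
    proof eventually_elim
      case (elim x)
      then have c: "(x, x0) \<in> g_comp multG invG" by (simp add: G.comp_iff)
      show ?case using gp_cancel_right[OF G.grp c] sig_rmult[OF c] by (simp add: F_def)
    qed
  qed
  also have "\<dots> = integral\<^sup>N (haar_lower invG nu ?s) F" by (rule G.right_transport[symmetric])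
  also have "\<dots> = (\<integral>\<^sup>+ x'. (\<integral>\<^sup>+ \<gamma>. ennreal (g2 x0 U W (act (invGa \<gamma>) x', invGa \<gamma>) *
         Delta (act (invGa \<gamma>) x') (invGa \<gamma>)) \<partial>lam (sig x')) \<partial>haar_lower invG nu ?s)"
  proof (rule nn_integral_cong_AE)
    show "AE x' in haar_lower invG nu ?s. F x' = (\<integral>\<^sup>+ \<gamma>. ennreal (g2 x0 U W (act (invGa \<gamma>) x', invGa \<gamma>) *
         Delta (act (invGa \<gamma>) x') (invGa \<gamma>)) \<partial>lam (sig x'))"
      using G.AE_lower[OF G.units_d[of x0]] by eventually_elim (simp add: inner_B[OF W] F_def)
  qed
  also have "\<dots> = (\<integral>\<^sup>+ x'. (\<integral>\<^sup>+ \<gamma>. ennreal (g2 x0 U W (x', \<gamma>)) \<partial>lam (sig x')) \<partial>haar_lower invG nu ?s)"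
    by (rule e)
  also have "\<dots> = (\<integral>\<^sup>+ x. (\<integral>\<^sup>+ \<gamma>. ennreal (g2 x0 U W (multG x x0, \<gamma>)) \<partial>lam (sig (multG x x0))) \<partial>haar_lower invG nu ?t)"
    by (rule G.right_transport)
  also have "\<dots> = (\<integral>\<^sup>+ x. (\<integral>\<^sup>+ \<gamma>. ennreal (h2 x0 U W (x, \<gamma>)) \<partial>lam (sig x)) \<partial>haar_lower invG nu ?t)"
  proof (rule nn_integral_cong_AE)
    show "AE x in haar_lower invG nu ?t. (\<integral>\<^sup>+ \<gamma>. ennreal (g2 x0 U W (multG x x0, \<gamma>)) \<partial>lam (sig (multG x x0)))
        = (\<integral>\<^sup>+ \<gamma>. ennreal (h2 x0 U W (x, \<gamma>)) \<partial>lam (sig x))"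
      using G.AE_lower[OF G.units_r[of x0]]
    proof eventually_elim
      case (elim x)
      then have c: "(x, x0) \<in> g_comp multG invG" by (simp add: G.comp_iff)
      have sx: "sig (multG x x0) = sig x" by (rule sig_rmult[OF c])
      show ?case unfolding sx
      proof (rule nn_integral_cong_AE)
        show "AE \<gamma> in lam (sig x). ennreal (g2 x0 U W (multG x x0, \<gamma>)) = ennreal (h2 x0 U W (x, \<gamma>))"
          using AE_SD[of x]
        proof eventually_elim
          case (elim \<gamma>)
          have inC: "(multG x x0, \<gamma>) \<in> C2 x0"
            using elim sx gp_d_mult[OF G.grp c] by (simp add: C2_def SD_iff)
          have "multG (multG x x0) (invG x0) = x" by (rule gp_cancel_right[OF G.grp c])
          then show ?case using inC by (simp add: g2_def h2_def)
        qed
      qed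
    qed
  qed
  finally show ?thesis .
qed


lemma lower_emeasure:
  assumes t: "t \<in> g_units multG invG" and A: "A \<in> sets borel"
  shows "emeasure (haar_lower invG nu t) A = emeasure (nu t) (invG -` A)"
proof -
  have gim: "invG \<in> measurable (nu t) borel"
    by (subst G.meas_nu_cong[OF t]) (rule borel_measurable_continuous_onI[OF G.cinv])
  show ?thesis unfolding haar_lower_def using emeasure_distr[OF gim A] G.space_nu[OF t] by simp
qed

lemma sets_lower: "sets (haar_lower invG nu t) = sets borel"
  by (simp add: haar_lower_def)

lemma lemC:
  assumes t: "t \<in> g_units multG invG" and a0t: "g_d multG invG a0 = t" and aSD: "(a0, \<beta>0) \<in> SD"
    and U: "open U" "a0 \<in> U" and W: "open W" "\<beta>0 \<in> W"
  obtains U' W' where "open U'" "open W'" "a0 \<in> U'" "\<beta>0 \<in> W'" "U' \<subseteq> U" "W' \<subseteq> W"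
    "0 < Xv t U' W'" "Xv t U' W' < \<infinity>"
proof -
  obtain W1 K1 where W1: "open W1" "compact K1" "\<beta>0 \<in> W1" "W1 \<subseteq> K1"
    using Ga.lc unfolding locally_compact_space_def by (metis UNIV_I compactin_euclidean_iff open_openin topspace_euclidean)
  obtain U1 KU where U1: "open U1" "compact KU" "a0 \<in> U1" "U1 \<subseteq> KU"
    using G.lc unfolding locally_compact_space_def by (metis UNIV_I compactin_euclidean_iff open_openin topspace_euclidean)
  obtain f2 where f2: "f2 \<in> Cc" "\<And>x. 0 \<le> f2 x" "\<And>x. f2 x \<le> 1" "\<And>x. x \<in> K1 \<Longrightarrow> f2 x = 1"
      "\<And>x. x \<notin> UNIV \<Longrightarrow> f2 x = 0"
    by (rule urysohn_compact[OF Ga.lc W1(2) open_UNIV subset_UNIV]) auto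
  let ?W' = "W \<inter> W1"
  have W'o: "open ?W'" using W W1 by auto
  obtain f where f: "f \<in> Cc" "\<And>x. 0 \<le> f x" "\<And>x. f x \<le> 1" "f \<beta>0 = 1" "\<And>x. x \<notin> ?W' \<Longrightarrow> f x = 0"
    by (rule urysohn_point[OF Ga.lc W'o]) (use W W1 in auto)
  define \<phi>2 where "\<phi>2 x = integral\<^sup>L (lam (sig x)) f2" for x
  define \<phi> where "\<phi> x = integral\<^sup>L (lam (sig x)) f" for x
  have c\<phi>2: "continuous_on UNIV \<phi>2" unfolding \<phi>2_def
    by (rule continuous_on_compose2[OF Ga.hs_cont[OF f2(1)] cont_sig]) (auto simp: sig_units)
  have c\<phi>: "continuous_on UNIV \<phi>" unfolding \<phi>_def
    by (rule continuous_on_compose2[OF Ga.hs_cont[OF f(1)] cont_sig]) (auto simp: sig_units)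
  have Rl: "\<And>x. radon_measure (lam (sig x))" by (rule Ga.hs_radon[OF sig_units])
  have \<phi>pos: "\<phi> a0 > 0"
  proof -
    have nn: "\<phi> a0 \<ge> 0" unfolding \<phi>_def using f(2) by simp
    have "\<beta>0 \<in> msupport (lam (sig a0))"
      using Ga.hs_supp[OF sig_units[of a0]] aSD by (simp add: SD_iff Ga.fib_def)
    moreover have "\<phi> a0 \<noteq> 0"
    proof
      assume "\<phi> a0 = 0"
      then have "f \<beta>0 = 0" using Cc_zero_on_support[OF Rl[of a0] f(1) f(2), of \<beta>0] calculation by (simp add: \<phi>_def)
      then show False using f(4) by simp
    qed
    ultimately show ?thesis using nn by simp
  qed
  define V2 where "V2 = {x. \<phi>2 x < \<phi>2 a0 + 1}"
  define V where "V = {x. \<phi> a0 / 2 < \<phi> x}"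
  have V2o: "open V2" unfolding V2_def by (rule open_Collect_less[OF c\<phi>2 continuous_on_const])
  have Vo: "open V" unfolding V_def by (rule open_Collect_less[OF continuous_on_const c\<phi>])
  have aV2: "a0 \<in> V2" by (simp add: V2_def)
  have aV: "a0 \<in> V" using \<phi>pos by (simp add: V_def)
  let ?U' = "U \<inter> U1 \<inter> V \<inter> V2"
  have U'o: "open ?U'" using U U1 Vo V2o by auto
  have W's: "?W' \<in> sets borel" using W'o by simp
  have upper: "emeasure (lam (sig x)) ?W' \<le> ennreal (\<phi>2 a0 + 1)" if x: "x \<in> V2" for x
  proof -
    have "emeasure (lam (sig x)) ?W' = (\<integral>\<^sup>+ \<gamma>. indicator ?W' \<gamma> \<partial>lam (sig x))"
      using W's sets_lam[of x] by simp
    also have "\<dots> \<le> (\<integral>\<^sup>+ \<gamma>. ennreal (f2 \<gamma>) \<partial>lam (sig x))"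
      using W1(4) f2(2) f2(4) by (intro nn_integral_mono) (auto simp: indicator_def)
    also have "\<dots> = ennreal (\<phi>2 x)" unfolding \<phi>2_def by (rule Cc_nn_integral[OF Rl f2(1) f2(2)])
    also have "\<dots> \<le> ennreal (\<phi>2 a0 + 1)" using x by (intro ennreal_leI) (simp add: V2_def)
    finally show ?thesis .
  qed
  have lower: "ennreal (\<phi> a0 / 2) \<le> emeasure (lam (sig x)) ?W'" if x: "x \<in> V" for x
  proof -
    have "ennreal (\<phi> a0 / 2) \<le> ennreal (\<phi> x)" using x by (intro ennreal_leI) (simp add: V_def)
    also have "\<dots> = (\<integral>\<^sup>+ \<gamma>. ennreal (f \<gamma>) \<partial>lam (sig x))" unfolding \<phi>_def by (rule Cc_nn_integral[OF Rl f(1) f(2), symmetric])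
    also have "\<dots> \<le> (\<integral>\<^sup>+ \<gamma>. indicator ?W' \<gamma> \<partial>lam (sig x))"
    proof (rule nn_integral_mono)
      fix \<gamma> show "ennreal (f \<gamma>) \<le> indicator ?W' \<gamma>"
        using f(3)[of \<gamma>] f(5)[of \<gamma>] by (cases "\<gamma> \<in> ?W'") auto
    qed
    also have "\<dots> = emeasure (lam (sig x)) ?W'" using W's sets_lam[of x] by simp
    finally show ?thesis .
  qed
  have KUs: "KU \<in> sets borel" using U1 by (simp add: borel_closed compact_imp_closed)
  have U's: "?U' \<in> sets borel" using U'o by simp
  have fin: "Xv t ?U' ?W' < \<infinity>"
  proof -
    have "Xv t ?U' ?W' \<le> (\<integral>\<^sup>+ x. ennreal (\<phi>2 a0 + 1) * indicator KU x \<partial>haar_lower invG nu t)"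
      unfolding Xv_def
    proof (rule nn_integral_mono)
      fix x show "indicator ?U' x * emeasure (lam (sig x)) ?W' \<le> ennreal (\<phi>2 a0 + 1) * indicator KU x"
        using upper[of x] U1(4) by (cases "x \<in> ?U'") auto
    qed
    also have "\<dots> = ennreal (\<phi>2 a0 + 1) * emeasure (haar_lower invG nu t) KU"
      using KUs sets_lower by (subst nn_integral_cmult_indicator) auto
    also have "\<dots> < \<infinity>"
    proof -
      have "invG -` KU = invG ` KU" using G.gp by (auto simp: image_iff) (metis)
      moreover have "compact (invG ` KU)"
        using U1(2) by (intro compact_continuous_image continuous_on_subset[OF G.cinv]) auto
      ultimately have "emeasure (nu t) (invG -` KU) < \<infinity>"
        using radon_compact_fin[OF G.hs_radon[OF t]] by simp
      then have "emeasure (haar_lower invG nu t) KU < \<infinity>" using lower_emeasure[OF t KUs] by simp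
      then show ?thesis by (simp add: ennreal_mult_less_top)
    qed
    finally show ?thesis .
  qed
  have pos: "0 < Xv t ?U' ?W'"
  proof -
    have "ennreal (\<phi> a0 / 2) * emeasure (haar_lower invG nu t) ?U' = (\<integral>\<^sup>+ x. ennreal (\<phi> a0 / 2) * indicator ?U' x \<partial>haar_lower invG nu t)"
      using U's sets_lower by (subst nn_integral_cmult_indicator) auto
    also have "\<dots> \<le> Xv t ?U' ?W'"
      unfolding Xv_def
    proof (rule nn_integral_mono)
      fix x show "ennreal (\<phi> a0 / 2) * indicator ?U' x \<le> indicator ?U' x * emeasure (lam (sig x)) ?W'"
        using lower[of x] by (cases "x \<in> ?U'") auto
    qed
    finally have le: "ennreal (\<phi> a0 / 2) * emeasure (haar_lower invG nu t) ?U' \<le> Xv t ?U' ?W'" .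
    have "open (invG -` ?U')" using U'o G.cinv by (intro open_vimage) auto
    moreover have "invG a0 \<in> invG -` ?U'" using U(2) U1(3) aV aV2 G.gp by simp
    moreover have "invG a0 \<in> msupport (nu t)" using G.hs_supp[OF t] a0t by (simp add: G.fib_def G.gp)
    ultimately have "0 < emeasure (nu t) (invG -` ?U')" unfolding msupport_def by blast
    then have "0 < emeasure (haar_lower invG nu t) ?U'" using lower_emeasure[OF t U's] by simp
    moreover have "0 < ennreal (\<phi> a0 / 2)" using \<phi>pos by simp
    ultimately have "0 < ennreal (\<phi> a0 / 2) * emeasure (haar_lower invG nu t) ?U'"
      by (simp add: zero_less_iff_neq_zero)
    then show ?thesis using le by (rule less_le_trans)
  qed
  show ?thesis
    by (rule that[of ?U' ?W']) (use U'o W'o U(2) U1(3) aV aV2 W(2) W1(3) pos fin in auto)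
qed


definition II :: "'a \<Rightarrow> ('a \<times> 'g \<Rightarrow> real) \<Rightarrow> ennreal" where
  "II t h = (\<integral>\<^sup>+ x. (\<integral>\<^sup>+ \<gamma>. ennreal (h (x, \<gamma>)) \<partial>lam (sig x)) \<partial>haar_lower invG nu t)"

lemma lemD:
  assumes t: "t \<in> g_units multG invG" and X: "0 < Xv t U W" "Xv t U W < \<infinity>" and c: "c > 1"
    and ea: "Xv t U W = II t ha" and eb: "Xv t U W = II t hb"
    and cmp: "\<And>x \<gamma>. g_d multG invG x = t \<Longrightarrow> (x, \<gamma>) \<in> SD \<Longrightarrow> ha (x, \<gamma>) \<le> (1/c) * hb (x, \<gamma>)"
    and nn: "\<And>x \<gamma>. g_d multG invG x = t \<Longrightarrow> (x, \<gamma>) \<in> SD \<Longrightarrow> hb (x, \<gamma>) \<ge> 0"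
  shows False
proof -
  have c0: "0 < 1/c" using c by simp
  have "II t ha \<le> (\<integral>\<^sup>+ x. ennreal (1/c) * (\<integral>\<^sup>+ \<gamma>. ennreal (hb (x, \<gamma>)) \<partial>lam (sig x)) \<partial>haar_lower invG nu t)"
    unfolding II_def
  proof (rule nn_integral_mono_AE)
    show "AE x in haar_lower invG nu t. (\<integral>\<^sup>+ \<gamma>. ennreal (ha (x, \<gamma>)) \<partial>lam (sig x))
        \<le> ennreal (1/c) * (\<integral>\<^sup>+ \<gamma>. ennreal (hb (x, \<gamma>)) \<partial>lam (sig x))"
      using G.AE_lower[OF t]
    proof eventually_elim
      case (elim x)
      note xt = elim
      have "(\<integral>\<^sup>+ \<gamma>. ennreal (ha (x, \<gamma>)) \<partial>lam (sig x)) \<le> (\<integral>\<^sup>+ \<gamma>. ennreal (1/c) * ennreal (hb (x, \<gamma>)) \<partial>lam (sig x))"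
      proof (rule nn_integral_mono_AE)
        show "AE \<gamma> in lam (sig x). ennreal (ha (x, \<gamma>)) \<le> ennreal (1/c) * ennreal (hb (x, \<gamma>))"
          using AE_SD[of x]
        proof eventually_elim
          case (elim \<gamma>)
          have "ennreal (ha (x, \<gamma>)) \<le> ennreal ((1/c) * hb (x, \<gamma>))"
            using cmp[OF xt elim] by (rule ennreal_leI)
          also have "\<dots> = ennreal (1/c) * ennreal (hb (x, \<gamma>))"
            using c0 nn[OF xt elim] by (subst ennreal_mult) auto
          finally show ?case .
        qed
      qed
      also have "\<dots> \<le> ennreal (1/c) * (\<integral>\<^sup>+ \<gamma>. ennreal (hb (x, \<gamma>)) \<partial>lam (sig x))"
        by (rule nn_integral_cmult_le_any[OF c0])
      finally show ?case .
    qed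
  qed
  also have "\<dots> \<le> ennreal (1/c) * II t hb" unfolding II_def by (rule nn_integral_cmult_le_any[OF c0])
  finally have "Xv t U W \<le> ennreal (1/c) * Xv t U W" using ea eb by simp
  then show False using ennreal_contra[OF X c] by simp
qed

definition EE :: "'a \<Rightarrow> ('a \<times> 'g) set" where
  "EE t = SD \<inter> {p. g_d multG invG (fst p) = t}"

lemma finish:
  fixes P Q :: "'a \<times> 'g \<Rightarrow> real" and ha hb :: "'a set \<Rightarrow> 'g set \<Rightarrow> 'a \<times> 'g \<Rightarrow> real"
  assumes t: "t \<in> g_units multG invG" and p0: "p0 \<in> EE t"
    and cP: "continuous_on (EE t) P" and cQ: "continuous_on (EE t) Q"
    and Qp0: "0 < Q p0" and PQ: "Q p0 < P p0"
    and Qpos: "\<And>p. p \<in> EE t \<Longrightarrow> Q p > 0"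
    and eqa: "\<And>U W. open U \<Longrightarrow> open W \<Longrightarrow> Xv t U W = II t (ha U W)"
    and eqb: "\<And>U W. open U \<Longrightarrow> open W \<Longrightarrow> Xv t U W = II t (hb U W)"
    and fa: "\<And>U W x \<gamma>. g_d multG invG x = t \<Longrightarrow> (x, \<gamma>) \<in> SD \<Longrightarrow>
        ha U W (x, \<gamma>) = indicator (U \<times> W) (Phi (x, \<gamma>)) / P (Phi (x, \<gamma>))"
    and fb: "\<And>U W x \<gamma>. g_d multG invG x = t \<Longrightarrow> (x, \<gamma>) \<in> SD \<Longrightarrow>
        hb U W (x, \<gamma>) = indicator (U \<times> W) (Phi (x, \<gamma>)) / Q (Phi (x, \<gamma>))"
  shows False
proof -
  obtain c U W where cUW: "c > 1" "open U" "open W" "p0 \<in> U \<times> W" "\<And>p. p \<in> (U \<times> W) \<inter> EE t \<Longrightarrow> P p > c * Q p"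
    using box_cmp[OF p0 cP cQ Qp0 PQ] by blast
  obtain a0 \<beta>0 where pa: "p0 = (a0, \<beta>0)" by (cases p0)
  have a0t: "g_d multG invG a0 = t" and aSD: "(a0, \<beta>0) \<in> SD" using p0 pa by (auto simp: EE_def)
  obtain U' W' where UW': "open U'" "open W'" "a0 \<in> U'" "\<beta>0 \<in> W'" "U' \<subseteq> U" "W' \<subseteq> W"
      "0 < Xv t U' W'" "Xv t U' W' < \<infinity>"
    using lemC[OF t a0t aSD cUW(2) _ cUW(3)] cUW(4) pa by blast
  show False
  proof (rule lemD[OF t UW'(7,8) cUW(1) eqa[OF UW'(1,2)] eqb[OF UW'(1,2)]])
    fix x \<gamma> assume x: "g_d multG invG x = t" and xs: "(x, \<gamma>) \<in> SD"
    let ?q = "Phi (x, \<gamma>)"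
    have qE: "?q \<in> EE t" using Phi_SD[OF xs] Phi_d[OF xs] x by (simp add: EE_def)
    have Qq: "Q ?q > 0" by (rule Qpos[OF qE])
    show "hb U' W' (x, \<gamma>) \<ge> 0" using fb[OF x xs] Qq by simp
    show "ha U' W' (x, \<gamma>) \<le> (1/c) * hb U' W' (x, \<gamma>)"
    proof (cases "?q \<in> U' \<times> W'")
      case True
      then have "?q \<in> (U \<times> W) \<inter> EE t" using UW'(5,6) qE by auto
      then have PQq: "P ?q > c * Q ?q" by (rule cUW(5))
      have cQ0: "0 < c * Q ?q" using Qq cUW(1) by simp
      have P0: "0 < P ?q" using cQ0 PQq by simp
      have "1 / P ?q \<le> 1 / (c * Q ?q)" using PQq cQ0 P0 by (intro divide_left_mono) auto
      also have "\<dots> = (1/c) * (1 / Q ?q)" by simp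
      finally show ?thesis using fa[OF x xs] fb[OF x xs] True by simp
    next
      case False
      then show ?thesis using fa[OF x xs] fb[OF x xs] by simp
    qed
  qed
qed

lemma main_local:
  assumes x0: "(x0, \<gamma>0) \<in> SD"
  shows "Delta x0 \<gamma>0 = Delta (g_r multG invG x0) \<gamma>0"
proof (rule ccontr)
  assume ne: "Delta x0 \<gamma>0 \<noteq> Delta (g_r multG invG x0) \<gamma>0"
  let ?t = "g_r multG invG x0"
  have ut: "?t \<in> g_units multG invG" by (rule G.units_r)
  have tSD: "(?t, \<gamma>0) \<in> SD" using x0 by (simp add: SD_iff sig_def G.gp)
  define p0 where "p0 = Phi (?t, \<gamma>0)"
  have p0E: "p0 \<in> EE ?t" using Phi_SD[OF tSD] Phi_d[OF tSD] by (simp add: EE_def p0_def G.gp)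
  have Pp0: "Phi p0 = (?t, \<gamma>0)" unfolding p0_def by (rule Phi_Phi[OF tSD])
  define F1 where "F1 p = Delta (fst (Phi p)) (snd (Phi p))" for p
  define F2 where "F2 p = Delta (multG (fst (Phi p)) x0) (snd (Phi p))" for p
  have ESD: "EE ?t \<subseteq> SD" by (auto simp: EE_def)
  have PhiE: "Phi ` EE ?t \<subseteq> SD" using Phi_SD ESD by auto
  have cF1: "continuous_on (EE ?t) F1" unfolding F1_def
    by (rule continuous_on_compose2[OF cont_Delta continuous_on_subset[OF cont_Phi ESD] PhiE])
  let ?R = "\<lambda>p. (multG (fst (Phi p)) x0, snd (Phi p))"
  have RE: "?R ` EE ?t \<subseteq> SD"
  proof
    fix q assume "q \<in> ?R ` EE ?t"
    then obtain p where p: "p \<in> EE ?t" "q = ?R p" by blast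
    have ps: "p \<in> SD" using p ESD by auto
    have c: "(fst (Phi p), x0) \<in> g_comp multG invG"
      using Phi_d[OF ps] p by (simp add: EE_def G.comp_iff)
    show "q \<in> SD" using p Phi_SD[OF ps] sig_rmult[OF c] by (simp add: SD_iff)
  qed
  have cR: "continuous_on (EE ?t) ?R"
  proof (intro continuous_on_Pair)
    have cf: "continuous_on (EE ?t) (\<lambda>p. fst (Phi p))"
      by (intro continuous_on_compose2[OF continuous_on_fst[OF continuous_on_id] continuous_on_subset[OF cont_Phi ESD]]) auto
    show "continuous_on (EE ?t) (\<lambda>p. multG (fst (Phi p)) x0)"
      by (rule continuous_on_compose2[OF G.cont_R[of x0] cf]) (use Phi_d in \<open>auto simp: EE_def\<close>)
    show "continuous_on (EE ?t) (\<lambda>p. snd (Phi p))"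
      by (intro continuous_on_compose2[OF continuous_on_snd[OF continuous_on_id] continuous_on_subset[OF cont_Phi ESD]]) auto
  qed
  have cF2: "continuous_on (EE ?t) F2" unfolding F2_def
    using continuous_on_compose2[OF cont_Delta cR RE] by simp
  have F1pos: "F1 p > 0" if "p \<in> EE ?t" for p
    using Delta_pos[of "Phi p"] Phi_SD[of p] that ESD by (auto simp: F1_def)
  have F2pos: "F2 p > 0" if "p \<in> EE ?t" for p
    using Delta_pos[of "?R p"] RE that by (auto simp: F2_def)
  have F1p0: "F1 p0 = Delta ?t \<gamma>0" using Pp0 by (simp add: F1_def)
  have F2p0: "F2 p0 = Delta x0 \<gamma>0" using Pp0 by (simp add: F2_def G.gp)
  have fa1: "h1 U W (x, \<gamma>) = indicator (U \<times> W) (Phi (x, \<gamma>)) / F1 (Phi (x, \<gamma>))"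
    if "(x, \<gamma>) \<in> SD" for U W x \<gamma>
    using that Phi_Phi[OF that] by (simp add: h1_def F1_def)
  have fb2: "h2 x0 U W (x, \<gamma>) = indicator (U \<times> W) (Phi (x, \<gamma>)) / F2 (Phi (x, \<gamma>))"
    if "(x, \<gamma>) \<in> SD" for U W x \<gamma>
    using that Phi_Phi[OF that] by (simp add: h2_def F2_def)
  have eq1: "\<And>U W. open U \<Longrightarrow> open W \<Longrightarrow> Xv ?t U W = II ?t (h1 U W)"
    unfolding II_def by (rule lemA[OF ut])
  have eq2: "\<And>U W. open U \<Longrightarrow> open W \<Longrightarrow> Xv ?t U W = II ?t (h2 x0 U W)"
    unfolding II_def by (rule lemB)
  show False
  proof (cases "F2 p0 < F1 p0")
    case True
    show False
      by (rule finish[OF ut p0E cF1 cF2 F2pos[OF p0E] True F2pos eq1 eq2]) (use fa1 fb2 in auto)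
  next
    case False
    then have "F1 p0 < F2 p0" using ne F1p0 F2p0 by auto
    then show False
      by (rule finish[OF ut p0E cF2 cF1 F1pos[OF p0E] _ F1pos eq2 eq1]) (use fa1 fb2 in auto)
  qed
qed

end

theorem mainTheorem2:
  fixes multGa :: "'g::t2_space \<Rightarrow> 'g \<Rightarrow> 'g" and invGa :: "'g \<Rightarrow> 'g"
    and lam :: "'g \<Rightarrow> 'g measure"
    and multG :: "'a::t2_space \<Rightarrow> 'a \<Rightarrow> 'a" and invG :: "'a \<Rightarrow> 'a"
    and nu :: "'a \<Rightarrow> 'a measure"
    and rho :: "'a \<Rightarrow> 'g" and act :: "'g \<Rightarrow> 'a \<Rightarrow> 'a"
    and Delta :: "'a \<Rightarrow> 'g \<Rightarrow> real"
  assumes "lcH_groupoid multGa invGa" and "sigma_compact_type TYPE('g)"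
    and "haar_system multGa invGa lam"
    and "lcH_groupoid multG invG" and "sigma_compact_type TYPE('a)"
    and "haar_system multG invG nu"
    and "haar_morphism multGa invGa lam multG invG nu rho act Delta"
  shows "\<forall>(x, \<gamma>) \<in> semidirect_h multGa invGa multG invG rho.
           Delta x \<gamma> = Delta (g_r multG invG x) \<gamma>"
proof -
  have G: "haar_gpd multG invG nu" using assms(4,6) by (rule haar_gpd.intro)
  have Ga: "haar_gpd multGa invGa lam" using assms(1,3) by (rule haar_gpd.intro)
  have hm: "morph_axioms multG invG nu multGa invGa lam rho act Delta"
    using assms(7) by (rule morph_axioms.intro)
  interpret morph multG invG nu multGa invGa lam rho act Delta
    using G Ga hm by (rule morph.intro)
  show ?thesis using main_local by (auto simp: SD_def)
qed

end
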